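(* Let $\rho\in\mathrm{Irr}(W)$. If there exists $\eta\in\mathrm X(\rho)$ with $\rho^*\otimes\epsilon\simeq\rho\otimes\eta$, then such $\eta$ is unique. The corresponding embedding $\epsilon\otimes\eta\hookrightarrow\rho^*\otimes\rho^*$ defines, up to a scalar, a nondegenerate bilinear form $\langle\,,\rangle$ on $V_\rho$ satisfying $\langle\rho(w)x,\rho(w)y\rangle=\epsilon(w)\eta(w)\langle x,y\rangle$; letting $\mathfrak{osp}(V_\rho)\subset\mathfrak{sl}(V_\rho)$ be the Lie subalgebra of endomorphisms $u$ with $\langle ux,y\rangle+\langle x,uy\rangle=0$, one has $\rho(\mathcal H')\subset\mathfrak{osp}(V_\rho)$. If moreover the form is symmetric and $\dim\rho>1$, then it is hyperbolic (i.e. $V_\rho$ is an orthogonal direct sum of hyperbolic planes).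
   Context: $W\subset\mathrm{GL}(V)$ is a finite group generated by reflections (elements of order 2 fixing a hyperplane) of a finite-dimensional complex vector space $V$; $\mathcal R$ is its set of reflections, $\epsilon=\det:W\to\{\pm1\}$ its sign character. $\mathbf k$ is a characteristic-0 field over which all irreducible representations of $W$ are defined and absolutely irreducible. $\mathcal H$ is the Lie subalgebra of $\mathbf kW$ (bracket $xy-yx$) generated by $\mathcal R$, $\mathcal H'$ its derived algebra. For $\rho\in\mathrm{Irr}(W)$ acting on $V_\rho$: $\mathrm X(\rho)=\{\eta\in\mathrm{Hom}(W,\{\pm1\}):\forall s\in\mathcal R,\ \eta(s)=-1\Rightarrow\rho(s)=\pm\mathrm{Id}\}$. *)

theory Defs
  imports "Jordan_Normal_Form.Determinant"
begin

definition is_reflection :: "nat \<Rightarrow> complex mat \<Rightarrow> bool" where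
  "is_reflection n s \<longleftrightarrow> s \<in> carrier_mat n n \<and> s * s = 1\<^sub>m n \<and> s \<noteq> 1\<^sub>m n \<and>
     (\<exists>c \<in> carrier_vec n. c \<noteq> 0\<^sub>v n \<and>
        (\<forall>v \<in> carrier_vec n. c \<bullet> v = 0 \<longrightarrow> s *\<^sub>v v = v))"

definition reflections :: "nat \<Rightarrow> complex mat set \<Rightarrow> complex mat set" where
  "reflections n W = {s \<in> W. is_reflection n s}"

text \<open>Submonoid generated by a set (for a finite group this is the subgroup generated).\<close>
inductive_set mat_monoid_gen :: "nat \<Rightarrow> complex mat set \<Rightarrow> complex mat set"
  for n S where
  one: "1\<^sub>m n \<in> mat_monoid_gen n S"
| gen: "s \<in> S \<Longrightarrow> x \<in> mat_monoid_gen n S \<Longrightarrow> s * x \<in> mat_monoid_gen n S"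

definition finite_mat_group :: "nat \<Rightarrow> complex mat set \<Rightarrow> bool" where
  "finite_mat_group n W \<longleftrightarrow> finite W \<and> W \<subseteq> carrier_mat n n \<and> 1\<^sub>m n \<in> W \<and>
     (\<forall>x \<in> W. \<forall>y \<in> W. x * y \<in> W) \<and> (\<forall>x \<in> W. \<exists>y \<in> W. x * y = 1\<^sub>m n \<and> y * x = 1\<^sub>m n)"

definition finite_reflection_group :: "nat \<Rightarrow> complex mat set \<Rightarrow> bool" where
  "finite_reflection_group n W \<longleftrightarrow> finite_mat_group n W \<and> W = mat_monoid_gen n (reflections n W)"

definition grp_inv :: "nat \<Rightarrow> complex mat set \<Rightarrow> complex mat \<Rightarrow> complex mat" where
  "grp_inv n W w = (THE v. v \<in> W \<and> w * v = 1\<^sub>m n)"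

text \<open>The sign character epsilon = det, with values +1/-1 taken in the field k.\<close>
definition sign_char :: "complex mat \<Rightarrow> 'k :: field" where
  "sign_char w = (if det w = 1 then 1 else - 1)"

definition is_rep :: "nat \<Rightarrow> complex mat set \<Rightarrow> nat \<Rightarrow> (complex mat \<Rightarrow> 'k :: field mat) \<Rightarrow> bool" where
  "is_rep n W d \<rho> \<longleftrightarrow> (\<forall>w \<in> W. \<rho> w \<in> carrier_mat d d) \<and> \<rho> (1\<^sub>m n) = 1\<^sub>m d \<and>
     (\<forall>x \<in> W. \<forall>y \<in> W. \<rho> (x * y) = \<rho> x * \<rho> y)"

definition is_subspace :: "nat \<Rightarrow> 'k :: field vec set \<Rightarrow> bool" where
  "is_subspace d U \<longleftrightarrow> U \<subseteq> carrier_vec d \<and> 0\<^sub>v d \<in> U \<and>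
     (\<forall>u \<in> U. \<forall>v \<in> U. u + v \<in> U) \<and> (\<forall>c. \<forall>u \<in> U. c \<cdot>\<^sub>v u \<in> U)"

definition irreducible_rep :: "nat \<Rightarrow> complex mat set \<Rightarrow> nat \<Rightarrow> (complex mat \<Rightarrow> 'k :: field mat) \<Rightarrow> bool" where
  "irreducible_rep n W d \<rho> \<longleftrightarrow> is_rep n W d \<rho> \<and> d > 0 \<and>
     (\<forall>U. is_subspace d U \<and> (\<forall>w \<in> W. \<forall>u \<in> U. \<rho> w *\<^sub>v u \<in> U) \<longrightarrow>
          U = {0\<^sub>v d} \<or> U = carrier_vec d)"

text \<open>k is a splitting field for W: every irreducible representation of W over k
  is absolutely irreducible (its commutant consists of scalars).\<close>
definition splitting_field_for :: "'k :: field itself \<Rightarrow> nat \<Rightarrow> complex mat set \<Rightarrow> bool" where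
  "splitting_field_for TYPE('k) n W \<longleftrightarrow>
     (\<forall>d (\<sigma> :: complex mat \<Rightarrow> 'k mat). irreducible_rep n W d \<sigma> \<longrightarrow>
        (\<forall>A \<in> carrier_mat d d. (\<forall>w \<in> W. A * \<sigma> w = \<sigma> w * A) \<longrightarrow> (\<exists>c. A = c \<cdot>\<^sub>m 1\<^sub>m d)))"

definition sign_hom :: "complex mat set \<Rightarrow> (complex mat \<Rightarrow> 'k :: field) \<Rightarrow> bool" where
  "sign_hom W \<eta> \<longleftrightarrow> (\<forall>w \<in> W. \<eta> w = 1 \<or> \<eta> w = - 1) \<and> (\<forall>x \<in> W. \<forall>y \<in> W. \<eta> (x * y) = \<eta> x * \<eta> y)"

definition X_set :: "nat \<Rightarrow> complex mat set \<Rightarrow> nat \<Rightarrow> (complex mat \<Rightarrow> 'k :: field mat) \<Rightarrow> (complex mat \<Rightarrow> 'k) set" where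
  "X_set n W d \<rho> = {\<eta>. sign_hom W \<eta> \<and>
     (\<forall>s \<in> reflections n W. \<eta> s = - 1 \<longrightarrow> \<rho> s = 1\<^sub>m d \<or> \<rho> s = - (1\<^sub>m d))}"

definition dual_rep :: "nat \<Rightarrow> complex mat set \<Rightarrow> (complex mat \<Rightarrow> 'k :: field mat) \<Rightarrow> complex mat \<Rightarrow> 'k mat" where
  "dual_rep n W \<rho> w = transpose_mat (\<rho> (grp_inv n W w))"

definition twist :: "(complex mat \<Rightarrow> 'k :: field mat) \<Rightarrow> (complex mat \<Rightarrow> 'k) \<Rightarrow> complex mat \<Rightarrow> 'k mat" where
  "twist \<rho> \<chi> w = \<chi> w \<cdot>\<^sub>m \<rho> w"

definition rep_iso :: "complex mat set \<Rightarrow> nat \<Rightarrow> (complex mat \<Rightarrow> 'k :: field mat) \<Rightarrow> (complex mat \<Rightarrow> 'k mat) \<Rightarrow> bool" where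
  "rep_iso W d \<rho> \<sigma> \<longleftrightarrow> (\<exists>P \<in> carrier_mat d d. invertible_mat P \<and> (\<forall>w \<in> W. P * \<rho> w = \<sigma> w * P))"

definition bform :: "'k :: field mat \<Rightarrow> 'k vec \<Rightarrow> 'k vec \<Rightarrow> 'k" where
  "bform B x y = x \<bullet> (B *\<^sub>v y)"

definition nondegenerate :: "nat \<Rightarrow> 'k :: field mat \<Rightarrow> bool" where
  "nondegenerate d B \<longleftrightarrow> (\<forall>x \<in> carrier_vec d. (\<forall>y \<in> carrier_vec d. bform B x y = 0) \<longrightarrow> x = 0\<^sub>v d)"

definition invariant_form :: "complex mat set \<Rightarrow> nat \<Rightarrow> (complex mat \<Rightarrow> 'k :: field mat) \<Rightarrow> (complex mat \<Rightarrow> 'k) \<Rightarrow> 'k mat \<Rightarrow> bool" where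
  "invariant_form W d \<rho> \<chi> B \<longleftrightarrow> B \<in> carrier_mat d d \<and>
     (\<forall>w \<in> W. \<forall>x \<in> carrier_vec d. \<forall>y \<in> carrier_vec d.
        bform B (\<rho> w *\<^sub>v x) (\<rho> w *\<^sub>v y) = \<chi> w * bform B x y)"

definition symmetric_form :: "nat \<Rightarrow> 'k :: field mat \<Rightarrow> bool" where
  "symmetric_form d B \<longleftrightarrow> (\<forall>x \<in> carrier_vec d. \<forall>y \<in> carrier_vec d. bform B x y = bform B y x)"

definition hyperbolic_form :: "nat \<Rightarrow> 'k :: field mat \<Rightarrow> bool" where
  "hyperbolic_form d B \<longleftrightarrow> (\<exists>m (e :: nat \<Rightarrow> 'k vec) f. d = 2 * m \<and>
     (\<forall>i < m. e i \<in> carrier_vec d \<and> f i \<in> carrier_vec d) \<and>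
     (\<forall>i < m. \<forall>j < m. bform B (e i) (e j) = 0 \<and> bform B (f i) (f j) = 0 \<and>
         bform B (e i) (f j) = (if i = j then 1 else 0) \<and>
         bform B (f j) (e i) = (if i = j then 1 else 0)) \<and>
     (\<forall>v \<in> carrier_vec d. \<exists>a b. \<forall>k < d. v $ k = (\<Sum>i<m. a i * e i $ k + b i * f i $ k)))"

definition mat_trace :: "'k :: field mat \<Rightarrow> 'k" where
  "mat_trace A = (\<Sum>i < dim_row A. A $$ (i, i))"

definition in_osp :: "nat \<Rightarrow> 'k :: field mat \<Rightarrow> 'k mat \<Rightarrow> bool" where
  "in_osp d B u \<longleftrightarrow> u \<in> carrier_mat d d \<and> mat_trace u = 0 \<and>
     (\<forall>x \<in> carrier_vec d. \<forall>y \<in> carrier_vec d. bform B (u *\<^sub>v x) y + bform B x (u *\<^sub>v y) = 0)"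

definition ga_mult :: "complex mat set \<Rightarrow> (complex mat \<Rightarrow> 'k :: field) \<Rightarrow> (complex mat \<Rightarrow> 'k) \<Rightarrow> complex mat \<Rightarrow> 'k" where
  "ga_mult W a b g = (\<Sum>x \<in> W. \<Sum>y \<in> W. if x * y = g then a x * b y else 0)"

definition ga_bracket :: "complex mat set \<Rightarrow> (complex mat \<Rightarrow> 'k :: field) \<Rightarrow> (complex mat \<Rightarrow> 'k) \<Rightarrow> complex mat \<Rightarrow> 'k" where
  "ga_bracket W a b = (\<lambda>g. ga_mult W a b g - ga_mult W b a g)"

definition ga_basis :: "complex mat \<Rightarrow> complex mat \<Rightarrow> 'k :: field" where
  "ga_basis s = (\<lambda>g. if g = s then 1 else 0)"

inductive_set lie_H :: "nat \<Rightarrow> complex mat set \<Rightarrow> (complex mat \<Rightarrow> 'k :: field) set"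
  for n W where
  gen: "s \<in> reflections n W \<Longrightarrow> ga_basis s \<in> lie_H n W"
| add: "a \<in> lie_H n W \<Longrightarrow> b \<in> lie_H n W \<Longrightarrow> (\<lambda>g. a g + b g) \<in> lie_H n W"
| smult: "a \<in> lie_H n W \<Longrightarrow> (\<lambda>g. c * a g) \<in> lie_H n W"
| bracket: "a \<in> lie_H n W \<Longrightarrow> b \<in> lie_H n W \<Longrightarrow> ga_bracket W a b \<in> lie_H n W"

inductive_set lie_H' :: "nat \<Rightarrow> complex mat set \<Rightarrow> (complex mat \<Rightarrow> 'k :: field) set"
  for n W where
  zero: "(\<lambda>g. 0) \<in> lie_H' n W"
| bracket: "a \<in> lie_H n W \<Longrightarrow> b \<in> lie_H n W \<Longrightarrow> ga_bracket W a b \<in> lie_H' n W"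
| add: "a \<in> lie_H' n W \<Longrightarrow> b \<in> lie_H' n W \<Longrightarrow> (\<lambda>g. a g + b g) \<in> lie_H' n W"
| smult: "a \<in> lie_H' n W \<Longrightarrow> (\<lambda>g. c * a g) \<in> lie_H' n W"

definition rep_ext :: "complex mat set \<Rightarrow> nat \<Rightarrow> (complex mat \<Rightarrow> 'k :: field mat) \<Rightarrow> (complex mat \<Rightarrow> 'k) \<Rightarrow> 'k mat" where
  "rep_ext W d \<rho> a = mat d d (\<lambda>(i, j). \<Sum>w \<in> W. a w * \<rho> w $$ (i, j))"

end

theory Submission
  imports Defs
begin

lemma fmg_inv:
  assumes G: "finite_mat_group n W" and w: "w \<in> W"
  shows "grp_inv n W w \<in> W \<and> w * grp_inv n W w = 1\<^sub>m n \<and> grp_inv n W w * w = 1\<^sub>m n"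
proof -
  from G have sub: "W \<subseteq> carrier_mat n n" and cl: "\<forall>x\<in>W. \<forall>y\<in>W. x * y \<in> W"
    and inv: "\<forall>x \<in> W. \<exists>y \<in> W. x * y = 1\<^sub>m n \<and> y * x = 1\<^sub>m n"
    unfolding finite_mat_group_def by auto
  from inv w obtain y where y: "y \<in> W" "w * y = 1\<^sub>m n" "y * w = 1\<^sub>m n" by blast
  have uniq: "v = y" if "v \<in> W" "w * v = 1\<^sub>m n" for v
  proof -
    have v: "v \<in> carrier_mat n n" using that sub by auto
    have yc: "y \<in> carrier_mat n n" using y sub by auto
    have wc: "w \<in> carrier_mat n n" using w sub by auto
    have "v = (y * w) * v" using y v by simp
    also have "\<dots> = y * (w * v)" using yc wc v by (simp add: assoc_mult_mat)
    also have "\<dots> = y" using that yc by simp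
    finally show ?thesis .
  qed
  have "grp_inv n W w = y" unfolding grp_inv_def
  proof (rule the_equality)
    show "y \<in> W \<and> w * y = 1\<^sub>m n" using y by simp
    show "\<And>v. v \<in> W \<and> w * v = 1\<^sub>m n \<Longrightarrow> v = y" using uniq by blast
  qed
  thus ?thesis using y by simp
qed

lemma gen_induct:
  assumes W: "finite_reflection_group n W"
    and one0: "P (1\<^sub>m n)"
    and step: "\<And>s x. s \<in> reflections n W \<Longrightarrow> x \<in> W \<Longrightarrow> P x \<Longrightarrow> P (s * x)"
    and w: "w \<in> W"
  shows "P w"
proof -
  have eq: "W = mat_monoid_gen n (reflections n W)" using W unfolding finite_reflection_group_def by auto
  from w have "w \<in> mat_monoid_gen n (reflections n W)" using eq by simp
  thus ?thesis
  proof (induction rule: mat_monoid_gen.induct)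
    case one then show ?case by (rule one0)
  next
    case (gen s x) then show ?case using step eq by auto
  qed
qed

lemma rep_inv:
  assumes G: "finite_mat_group n W" and R: "is_rep n W d \<rho>" and w: "w \<in> W"
  shows "\<rho> w * \<rho> (grp_inv n W w) = 1\<^sub>m d \<and> \<rho> (grp_inv n W w) * \<rho> w = 1\<^sub>m d"
proof -
  have "grp_inv n W w \<in> W \<and> w * grp_inv n W w = 1\<^sub>m n \<and> grp_inv n W w * w = 1\<^sub>m n"
    by (rule fmg_inv[OF G w])
  hence g: "grp_inv n W w \<in> W" "w * grp_inv n W w = 1\<^sub>m n" "grp_inv n W w * w = 1\<^sub>m n" by auto
  from R have m: "\<And>x y. x \<in> W \<Longrightarrow> y \<in> W \<Longrightarrow> \<rho> (x * y) = \<rho> x * \<rho> y" and o: "\<rho> (1\<^sub>m n) = 1\<^sub>m d"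
    unfolding is_rep_def by auto
  show ?thesis using m[OF w g(1)] m[OF g(1) w] g o by simp
qed

lemma mat_col_unit: fixes A :: "'a::semiring_1 mat" assumes "A \<in> carrier_mat n m" "i < n" "k < m"
  shows "(A *\<^sub>v unit_vec m k) $ i = A $$ (i,k)"
  using assms by auto

lemma refl_det:
  fixes s :: "complex mat"
  assumes r: "is_reflection n s"
  shows "det s = -1"
proof -
  from r have sC: "s \<in> carrier_mat n n" and ss: "s * s = 1\<^sub>m n" and s1: "s \<noteq> 1\<^sub>m n"
    unfolding is_reflection_def by auto
  from r obtain c where cC: "c \<in> carrier_vec n" and c0: "c \<noteq> 0\<^sub>v n"
    and fixc: "\<And>v. v \<in> carrier_vec n \<Longrightarrow> c \<bullet> v = 0 \<Longrightarrow> s *\<^sub>v v = v"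
    unfolding is_reflection_def by auto
  from c0 cC obtain j where j: "j < n" "c $ j \<noteq> 0"
    by (metis carrier_vecD eq_vecI index_zero_vec(1) index_zero_vec(2))
  define w where "w = (1 / c $ j) \<cdot>\<^sub>v unit_vec n j"
  have wC: "w \<in> carrier_vec n" unfolding w_def by simp
  have cw: "c \<bullet> w = 1" unfolding w_def using cC j by (simp add: scalar_prod_right_unit)
  define M where "M = s - 1\<^sub>m n"
  have MC: "M \<in> carrier_mat n n" unfolding M_def by (rule minus_carrier_mat) simp
  define u where "u = M *\<^sub>v w"
  have uC: "u \<in> carrier_vec n" unfolding u_def using MC wC by simp
  have Mv: "M *\<^sub>v v = (c \<bullet> v) \<cdot>\<^sub>v u" if vC: "v \<in> carrier_vec n" for v
  proof -
    define z where "z = v - (c \<bullet> v) \<cdot>\<^sub>v w"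
    have zC: "z \<in> carrier_vec n" unfolding z_def using vC wC by simp
    have "c \<bullet> z = c \<bullet> v - (c \<bullet> v) * (c \<bullet> w)" unfolding z_def
      using cC vC wC by (simp add: scalar_prod_minus_distrib)
    hence cz: "c \<bullet> z = 0" using cw by simp
    have "M *\<^sub>v z = s *\<^sub>v z - z" unfolding M_def using sC zC
      by (simp add: minus_mult_distrib_mat_vec)
    hence Mz: "M *\<^sub>v z = 0\<^sub>v n" using fixc[OF zC cz] zC by simp
    have "M *\<^sub>v z = M *\<^sub>v v - (c \<bullet> v) \<cdot>\<^sub>v u" unfolding z_def u_def
      using MC vC wC by (simp add: mult_minus_distrib_mat_vec mult_mat_vec)
    with Mz have E: "M *\<^sub>v v - (c \<bullet> v) \<cdot>\<^sub>v u = 0\<^sub>v n" by simp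
    { fix i assume i: "i < n"
      from arg_cong[OF E, of "\<lambda>x. x $ i"] have "(M *\<^sub>v v) $ i - (c \<bullet> v) * u $ i = 0"
        using i MC uC by simp
      hence "(M *\<^sub>v v) $ i = ((c \<bullet> v) \<cdot>\<^sub>v u) $ i" using i uC by simp }
    thus ?thesis using MC uC by (intro eq_vecI) auto
  qed
  have Ment: "M $$ (i,k) = u $ i * c $ k" if "i < n" "k < n" for i k
  proof -
    have "M $$ (i,k) = (M *\<^sub>v unit_vec n k) $ i" using MC that by (simp add: mat_col_unit)
    also have "\<dots> = ((c \<bullet> unit_vec n k) \<cdot>\<^sub>v u) $ i" using Mv[of "unit_vec n k"] by simp
    also have "\<dots> = c $ k * u $ i" using that cC uC by (simp add: scalar_prod_right_unit)
    finally show ?thesis by simp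
  qed
  have u0: "u \<noteq> 0\<^sub>v n"
  proof
    assume "u = 0\<^sub>v n"
    hence "M = 0\<^sub>m n n" using Ment MC by (intro eq_matI) auto
    hence Z: "s - 1\<^sub>m n = 0\<^sub>m n n" unfolding M_def .
    have "s = 1\<^sub>m n"
    proof (rule eq_matI)
      fix i k assume ik: "i < dim_row (1\<^sub>m n)" "k < dim_col (1\<^sub>m n)"
      from arg_cong[OF Z, of "\<lambda>x. x $$ (i,k)"] show "s $$ (i,k) = 1\<^sub>m n $$ (i,k)"
        using ik sC by auto
    qed (use sC in auto)
    with s1 show False by simp
  qed
  have sv: "s *\<^sub>v v = v + M *\<^sub>v v" if "v \<in> carrier_vec n" for v
    unfolding M_def using sC that by (simp add: minus_mult_distrib_mat_vec) (intro eq_vecI, auto)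
  have "s *\<^sub>v u = (s * s) *\<^sub>v w - s *\<^sub>v w" unfolding u_def M_def
    using sC wC by (simp add: minus_mult_distrib_mat_vec mult_minus_distrib_mat_vec assoc_mult_mat_vec)
  also have "\<dots> = w - s *\<^sub>v w" using ss wC by simp
  also have "\<dots> = - u" unfolding u_def M_def using sC wC
    by (simp add: minus_mult_distrib_mat_vec) (intro eq_vecI, auto)
  finally have su: "s *\<^sub>v u = - u" .
  have "s *\<^sub>v u = u + (c \<bullet> u) \<cdot>\<^sub>v u" using sv[OF uC] Mv[OF uC] by simp
  hence E1: "- u = u + (c \<bullet> u) \<cdot>\<^sub>v u" using su by simp
  have "(c \<bullet> u + 2) \<cdot>\<^sub>v u = 0\<^sub>v n"
  proof (intro eq_vecI)
    fix i assume i: "i < dim_vec (0\<^sub>v n :: complex vec)"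
    from arg_cong[OF E1, of "\<lambda>x. x $ i"] i uC have "- u $ i = u $ i + (c \<bullet> u) * u $ i" by simp
    thus "((c \<bullet> u + 2) \<cdot>\<^sub>v u) $ i = 0\<^sub>v n $ i" using i uC by (simp add: algebra_simps)
  qed (use uC in simp)
  hence E2: "(c \<bullet> u + 2) \<cdot>\<^sub>v u = 0\<^sub>v n" .
  from u0 uC obtain i where i: "i < n" "u $ i \<noteq> 0"
    by (metis carrier_vecD eq_vecI index_zero_vec(1) index_zero_vec(2))
  from arg_cong[OF E2, of "\<lambda>x. x $ i"] i uC have "(c \<bullet> u + 2) * u $ i = 0" by simp
  with i have "c \<bullet> u + 2 = 0" by simp
  hence cu: "c \<bullet> u = -2" by (simp add: add_eq_0_iff2)
  define U where "U = mat n 1 (\<lambda>(i,_). u $ i)"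
  define Cm where "Cm = mat 1 n (\<lambda>(_,k). c $ k)"
  define a where "a = mat 1 1 (\<lambda>_. 1 + c \<bullet> u)"
  have UC: "U \<in> carrier_mat n 1" and CmC: "Cm \<in> carrier_mat 1 n" and aC: "a \<in> carrier_mat 1 1"
    unfolding U_def Cm_def a_def by auto
  have sU: "s = 1\<^sub>m n + U * Cm"
  proof (rule eq_matI)
    fix i k assume ik: "i < dim_row (1\<^sub>m n + U * Cm)" "k < dim_col (1\<^sub>m n + U * Cm)"
    hence ik': "i < n" "k < n" using UC CmC by auto
    have "s $$ (i,k) = 1\<^sub>m n $$ (i,k) + M $$ (i,k)" unfolding M_def using sC ik' by simp
    thus "s $$ (i,k) = (1\<^sub>m n + U * Cm) $$ (i,k)" using ik' Ment
      by (simp add: U_def Cm_def scalar_prod_def)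
  qed (use sC UC CmC in auto)
  have CU: "Cm * U = mat 1 1 (\<lambda>_. c \<bullet> u)"
    by (rule eq_matI) (use cC uC in \<open>auto simp: U_def Cm_def scalar_prod_def\<close>)
  define L where "L = four_block_mat (1\<^sub>m n) (0\<^sub>m n 1) (- Cm) (1\<^sub>m 1)"
  define R1 where "R1 = four_block_mat (1\<^sub>m n) U (0\<^sub>m 1 n) a"
  define R2 where "R2 = four_block_mat s U (0\<^sub>m 1 n) (1\<^sub>m 1)"
  define X where "X = four_block_mat (1\<^sub>m n) U (- Cm) (1\<^sub>m 1)"
  have LC: "L \<in> carrier_mat (n+1) (n+1)" unfolding L_def using CmC by (intro four_block_carrier_mat) auto
  have R1C: "R1 \<in> carrier_mat (n+1) (n+1)" unfolding R1_def using aC by (intro four_block_carrier_mat) auto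
  have R2C: "R2 \<in> carrier_mat (n+1) (n+1)" unfolding R2_def using sC by (intro four_block_carrier_mat) auto
  have "L * R1 = four_block_mat (1\<^sub>m n * 1\<^sub>m n + 0\<^sub>m n 1 * 0\<^sub>m 1 n) (1\<^sub>m n * U + 0\<^sub>m n 1 * a)
     (- Cm * 1\<^sub>m n + 1\<^sub>m 1 * 0\<^sub>m 1 n) (- Cm * U + 1\<^sub>m 1 * a)"
    unfolding L_def R1_def by (rule mult_four_block_mat) (use UC CmC aC in auto)
  also have "\<dots> = X" unfolding X_def
  proof -
    have e1: "- Cm * U + 1\<^sub>m 1 * a = 1\<^sub>m 1"
      using CU UC CmC aC by (intro eq_matI) (auto simp: a_def)
    show "four_block_mat (1\<^sub>m n * 1\<^sub>m n + 0\<^sub>m n 1 * 0\<^sub>m 1 n) (1\<^sub>m n * U + 0\<^sub>m n 1 * a)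
     (- Cm * 1\<^sub>m n + 1\<^sub>m 1 * 0\<^sub>m 1 n) (- Cm * U + 1\<^sub>m 1 * a) = four_block_mat (1\<^sub>m n) U (- Cm) (1\<^sub>m 1)"
      using e1 UC CmC aC by simp
  qed
  finally have X1: "X = L * R1" by simp
  have "R2 * L = four_block_mat (s * 1\<^sub>m n + U * - Cm) (s * 0\<^sub>m n 1 + U * 1\<^sub>m 1)
     (0\<^sub>m 1 n * 1\<^sub>m n + 1\<^sub>m 1 * - Cm) (0\<^sub>m 1 n * 0\<^sub>m n 1 + 1\<^sub>m 1 * 1\<^sub>m 1)"
    unfolding L_def R2_def by (rule mult_four_block_mat) (use UC CmC sC in auto)
  also have "\<dots> = X" unfolding X_def
  proof -
    have e1: "s * 1\<^sub>m n + U * - Cm = 1\<^sub>m n"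
    proof (rule eq_matI)
      fix i k assume ik: "i < dim_row (1\<^sub>m n)" "k < dim_col (1\<^sub>m n :: complex mat)"
      hence ik': "i < n" "k < n" by auto
      have "s $$ (i,k) = (1\<^sub>m n + U * Cm) $$ (i,k)" using sU by simp
      thus "(s * 1\<^sub>m n + U * - Cm) $$ (i,k) = 1\<^sub>m n $$ (i,k)" using ik' sC UC CmC
        by (simp add: U_def Cm_def scalar_prod_def)
    qed (use sC UC CmC in auto)
    show "four_block_mat (s * 1\<^sub>m n + U * - Cm) (s * 0\<^sub>m n 1 + U * 1\<^sub>m 1)
     (0\<^sub>m 1 n * 1\<^sub>m n + 1\<^sub>m 1 * - Cm) (0\<^sub>m 1 n * 0\<^sub>m n 1 + 1\<^sub>m 1 * 1\<^sub>m 1) = four_block_mat (1\<^sub>m n) U (- Cm) (1\<^sub>m 1)"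
      using e1 UC CmC sC by simp
  qed
  finally have X2: "X = R2 * L" by simp
  have dL: "det L = 1" unfolding L_def
    by (subst det_four_block_mat_upper_right_zero_col) (use CmC in auto)
  have dR1: "det R1 = 1 + c \<bullet> u" unfolding R1_def
    by (subst det_four_block_mat_lower_left_zero[of _ n _ 1]) (use UC aC in \<open>auto simp: det_single a_def\<close>)
  have dR2: "det R2 = det s" unfolding R2_def
    by (subst det_four_block_mat_lower_left_zero[of _ n _ 1]) (use UC sC in auto)
  have "det X = 1 + c \<bullet> u" using X1 det_mult[OF LC R1C] dL dR1 by simp
  moreover have "det X = det s" using X2 det_mult[OF R2C LC] dL dR2 by simp
  ultimately show ?thesis using cu by simp
qed

lemma grp_inv_unique:
  assumes G: "finite_mat_group n W" and w: "w \<in> W" and y: "y \<in> W" "w * y = 1\<^sub>m n"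
  shows "grp_inv n W w = y"
proof -
  from G have sub: "W \<subseteq> carrier_mat n n" unfolding finite_mat_group_def by auto
  note g = fmg_inv[OF G w]
  let ?v = "grp_inv n W w"
  have vc: "?v \<in> carrier_mat n n" and wc: "w \<in> carrier_mat n n" and yc: "y \<in> carrier_mat n n"
    using g y w sub by auto
  have "y = (?v * w) * y" using g y sub by auto
  also have "\<dots> = ?v * (w * y)" using vc wc yc by (rule assoc_mult_mat)
  also have "\<dots> = ?v" using y g sub by auto
  finally show ?thesis by simp
qed

lemma grp_inv_inv:
  assumes G: "finite_mat_group n W" and w: "w \<in> W"
  shows "grp_inv n W (grp_inv n W w) = w"
  using fmg_inv[OF G w] grp_inv_unique[OF G, of "grp_inv n W w" w] w by auto

lemma sign_char_vals: "(sign_char w :: 'k::field) = 1 \<or> sign_char w = -1"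
  unfolding sign_char_def by auto

lemma sign_char_inv:
  assumes G: "finite_mat_group n W" and w: "w \<in> W"
  shows "(sign_char (grp_inv n W w) :: 'k::field) = sign_char w"
proof -
  from G have sub: "W \<subseteq> carrier_mat n n" unfolding finite_mat_group_def by auto
  note g = fmg_inv[OF G w]
  have "det w * det (grp_inv n W w) = 1" using det_mult[of w n "grp_inv n W w"] g w sub by auto
  hence "det w = 1 \<longleftrightarrow> det (grp_inv n W w) = 1" by auto
  thus ?thesis unfolding sign_char_def by simp
qed

lemma sign_hom_one:
  assumes G: "finite_mat_group n W" and h: "sign_hom W \<eta>"
  shows "\<eta> (1\<^sub>m n) = (1::'k::field)"
proof -
  have o: "1\<^sub>m n \<in> W" using G unfolding finite_mat_group_def by auto
  have "\<eta> (1\<^sub>m n * 1\<^sub>m n) = \<eta> (1\<^sub>m n) * \<eta> (1\<^sub>m n)" using h o unfolding sign_hom_def by blast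
  hence "\<eta> (1\<^sub>m n) = \<eta> (1\<^sub>m n) * \<eta> (1\<^sub>m n)" by simp
  moreover have "\<eta> (1\<^sub>m n) \<noteq> 0" using h o unfolding sign_hom_def by force
  ultimately show ?thesis by (metis mult_cancel_left1)
qed

lemma sign_hom_inv:
  assumes G: "finite_mat_group n W" and h: "sign_hom W \<eta>" and w: "w \<in> W"
  shows "\<eta> (grp_inv n W w) = (\<eta> w :: 'k::field)"
proof -
  note g = fmg_inv[OF G w]
  have "\<eta> w * \<eta> (grp_inv n W w) = 1" using h g w sign_hom_one[OF G h] unfolding sign_hom_def by metis
  moreover have "\<eta> w = 1 \<or> \<eta> w = -1" "\<eta> (grp_inv n W w) = 1 \<or> \<eta> (grp_inv n W w) = -1"
    using h g w unfolding sign_hom_def by auto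
  ultimately show ?thesis by auto
qed

lemma sign_hom_sq: "sign_hom W \<eta> \<Longrightarrow> w \<in> W \<Longrightarrow> \<eta> w * \<eta> w = (1::'k::field)"
  unfolding sign_hom_def by auto

lemma bform_unit: "A \<in> carrier_mat d d \<Longrightarrow> i < d \<Longrightarrow> j < d \<Longrightarrow>
  bform A (unit_vec d i) (unit_vec d j) = (A $$ (i,j) :: 'k::field)"
  unfolding bform_def by (subst scalar_prod_left_unit) auto

lemma bform_eq_mat:
  assumes "A \<in> carrier_mat d d" "B \<in> carrier_mat d d"
    and "\<And>x y. x \<in> carrier_vec d \<Longrightarrow> y \<in> carrier_vec d \<Longrightarrow> bform A x y = (bform B x y :: 'k::field)"
  shows "A = B"
proof (rule eq_matI)
  fix i j assume "i < dim_row B" "j < dim_col B"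
  thus "A $$ (i,j) = B $$ (i,j)" using assms bform_unit[of A d i j] bform_unit[of B d i j] by auto
qed (use assms in auto)

lemma bform_via:
  assumes R: "R \<in> carrier_mat d d" and B: "B \<in> carrier_mat d d"
    and x: "x \<in> carrier_vec d" and y: "y \<in> carrier_vec d"
  shows "bform B (R *\<^sub>v x) (R *\<^sub>v y) = bform (R\<^sup>T * B * R) x (y :: 'k::field vec)"
proof -
  have z: "B *\<^sub>v (R *\<^sub>v y) \<in> carrier_vec d" using B R y by simp
  have "(R *\<^sub>v x) \<bullet> (B *\<^sub>v (R *\<^sub>v y)) = (B *\<^sub>v (R *\<^sub>v y)) \<bullet> (R *\<^sub>v x)"
    using z R x by (intro comm_scalar_prod) auto
  also have "\<dots> = (R\<^sup>T *\<^sub>v (B *\<^sub>v (R *\<^sub>v y))) \<bullet> x"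
    using transpose_vec_mult_scalar[OF R x z] by simp
  also have "\<dots> = x \<bullet> (R\<^sup>T *\<^sub>v (B *\<^sub>v (R *\<^sub>v y)))"
    using z R x by (intro comm_scalar_prod) auto
  also have "R\<^sup>T *\<^sub>v (B *\<^sub>v (R *\<^sub>v y)) = (R\<^sup>T * B * R) *\<^sub>v y"
  proof -
    have "(R\<^sup>T * B * R) *\<^sub>v y = (R\<^sup>T * B) *\<^sub>v (R *\<^sub>v y)"
      by (rule assoc_mult_mat_vec) (use R B y in auto)
    also have "\<dots> = R\<^sup>T *\<^sub>v (B *\<^sub>v (R *\<^sub>v y))"
      by (rule assoc_mult_mat_vec) (use R B y in auto)
    finally show ?thesis by simp
  qed
  finally show ?thesis unfolding bform_def .
qed

lemma bform_left_zero:
  assumes B: "B \<in> carrier_mat d d" and x: "x \<in> carrier_vec d" and y: "y \<in> carrier_vec d"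
  shows "bform B x y = (B\<^sup>T *\<^sub>v x) \<bullet> (y :: 'k::field vec)"
  unfolding bform_def using transpose_vec_mult_scalar[OF B y x] by simp

lemma inv_obtain:
  assumes P: "P \<in> carrier_mat d d" and inv: "invertible_mat (P :: 'k::field mat)"
  obtains Q where "Q \<in> carrier_mat d d" "P * Q = 1\<^sub>m d" "Q * P = 1\<^sub>m d"
proof -
  from inv obtain Q where a: "P * Q = 1\<^sub>m (dim_row P)" "Q * P = 1\<^sub>m (dim_row Q)"
    unfolding invertible_mat_def inverts_mat_def by auto
  have r: "dim_row Q = d"
    using arg_cong[OF a(2), of dim_col] P by auto
  have c: "dim_col Q = d"
    using arg_cong[OF a(1), of dim_col] P by auto
  have QC: "Q \<in> carrier_mat d d" unfolding carrier_mat_def using r c by simp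
  moreover have "P * Q = 1\<^sub>m d" using a(1) P by simp
  moreover have "Q * P = 1\<^sub>m d" using a(2) r by simp
  ultimately show ?thesis by (rule that)
qed

lemma smult_smult_mat: "(a::'a::comm_ring_1) \<cdot>\<^sub>m (b \<cdot>\<^sub>m A) = (a * b) \<cdot>\<^sub>m A"
  by (rule eq_matI) auto

lemma one_smult_mat': "(1::'a::ring_1) \<cdot>\<^sub>m A = A"
  by (rule eq_matI) auto

lemma smult_mat_mult_vec: "A \<in> carrier_mat nr nc \<Longrightarrow> v \<in> carrier_vec nc \<Longrightarrow> (c \<cdot>\<^sub>m A) *\<^sub>v v = c \<cdot>\<^sub>v (A *\<^sub>v (v::'a::comm_ring_1 vec))"
  by (rule eq_vecI) (auto simp: scalar_prod_def sum_distrib_left ac_simps intro!: sum.cong)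

lemma exists_form:
  assumes G: "finite_mat_group n W" and R: "is_rep n W d \<rho>" and h: "sign_hom W \<eta>"
    and iso: "rep_iso W d (twist (dual_rep n W \<rho>) sign_char) (twist \<rho> (\<eta> :: complex mat \<Rightarrow> 'k::field))"
  shows "\<exists>B. invariant_form W d \<rho> (\<lambda>w. sign_char w * \<eta> w) B \<and> nondegenerate d B"
proof -
  from iso obtain P where PC: "P \<in> carrier_mat d d" and Pinv: "invertible_mat P"
    and PI: "\<And>w. w \<in> W \<Longrightarrow> P * twist (dual_rep n W \<rho>) sign_char w = twist \<rho> \<eta> w * P"
    unfolding rep_iso_def by auto
  obtain Q where QC: "Q \<in> carrier_mat d d" and PQ: "P * Q = 1\<^sub>m d" and QP: "Q * P = 1\<^sub>m d"
    using inv_obtain[OF PC Pinv] by blast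
  have RC: "\<And>w. w \<in> W \<Longrightarrow> \<rho> w \<in> carrier_mat d d" using R unfolding is_rep_def by auto
  have key: "(\<rho> w)\<^sup>T * Q * \<rho> w = (sign_char w * \<eta> w) \<cdot>\<^sub>m Q" if w: "w \<in> W" for w
  proof -
    note g = fmg_inv[OF G w]
    define v where "v = grp_inv n W w"
    have v: "v \<in> W" using g v_def by simp
    have vv: "grp_inv n W v = w" unfolding v_def by (rule grp_inv_inv[OF G w])
    define e where "e = (sign_char w :: 'k)"
    define t where "t = \<eta> w"
    have ev: "sign_char v = e" unfolding e_def v_def by (rule sign_char_inv[OF G w])
    have tv: "\<eta> v = t" unfolding t_def v_def by (rule sign_hom_inv[OF G h w])
    have ee: "e * e = 1" unfolding e_def sign_char_def by auto
    have tt: "t * t = 1" unfolding t_def using sign_hom_sq[OF h w] .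
    have Rw: "\<rho> w \<in> carrier_mat d d" and Rv: "\<rho> v \<in> carrier_mat d d" using RC w v by auto
    have RvRw: "\<rho> v * \<rho> w = 1\<^sub>m d" using rep_inv[OF G R w] v_def by simp
    have eq: "P * (e \<cdot>\<^sub>m (\<rho> w)\<^sup>T) = (t \<cdot>\<^sub>m \<rho> v) * P"
      using PI[OF v] unfolding twist_def dual_rep_def vv ev tv .
    have RtC: "(\<rho> w)\<^sup>T \<in> carrier_mat d d" using Rw by simp
    have "Q * (P * (e \<cdot>\<^sub>m (\<rho> w)\<^sup>T)) = (Q * P) * (e \<cdot>\<^sub>m (\<rho> w)\<^sup>T)"
      by (rule assoc_mult_mat[symmetric]) (use QC PC RtC in auto)
    also have "\<dots> = e \<cdot>\<^sub>m (\<rho> w)\<^sup>T" using QP RtC by simp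
    finally have s1: "Q * (P * (e \<cdot>\<^sub>m (\<rho> w)\<^sup>T)) = e \<cdot>\<^sub>m (\<rho> w)\<^sup>T" .
    have "Q * ((t \<cdot>\<^sub>m \<rho> v) * P) = Q * (t \<cdot>\<^sub>m (\<rho> v * P))"
      using mult_smult_assoc_mat[OF Rv PC] by simp
    also have "\<dots> = t \<cdot>\<^sub>m (Q * (\<rho> v * P))" by (rule mult_smult_distrib) (use QC Rv PC in auto)
    also have "Q * (\<rho> v * P) = Q * \<rho> v * P" by (rule assoc_mult_mat[symmetric]) (use QC PC Rv in auto)
    finally have s2: "Q * ((t \<cdot>\<^sub>m \<rho> v) * P) = t \<cdot>\<^sub>m (Q * \<rho> v * P)" .
    have "e \<cdot>\<^sub>m (\<rho> w)\<^sup>T = t \<cdot>\<^sub>m (Q * \<rho> v * P)" using s1 s2 eq by simp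
    hence "e \<cdot>\<^sub>m (e \<cdot>\<^sub>m (\<rho> w)\<^sup>T) = e \<cdot>\<^sub>m (t \<cdot>\<^sub>m (Q * \<rho> v * P))" by simp
    hence Rt: "(\<rho> w)\<^sup>T = (e * t) \<cdot>\<^sub>m (Q * \<rho> v * P)" using ee by (simp add: smult_smult_mat one_smult_mat')
    have QRPC: "Q * \<rho> v * P \<in> carrier_mat d d" using QC Rv PC by simp
    have "(\<rho> w)\<^sup>T * Q * \<rho> w = ((e * t) \<cdot>\<^sub>m (Q * \<rho> v * P)) * Q * \<rho> w" unfolding Rt ..
    also have "\<dots> = (e * t) \<cdot>\<^sub>m (Q * \<rho> v * P * Q * \<rho> w)"
      using mult_smult_assoc_mat[OF QRPC QC] mult_smult_assoc_mat[of "Q * \<rho> v * P * Q" d d "\<rho> w" d] QRPC QC Rw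
      by simp
    also have "Q * \<rho> v * P * Q * \<rho> w = Q * (\<rho> v * ((P * Q) * \<rho> w))"
    proof -
      have "Q * \<rho> v * P * Q * \<rho> w = (Q * \<rho> v) * ((P * Q) * \<rho> w)"
        using QC Rv PC Rw by (simp add: assoc_mult_mat[of "Q * \<rho> v" d d P d] assoc_mult_mat[of _ d d _ d _ d])
      also have "\<dots> = Q * (\<rho> v * ((P * Q) * \<rho> w))"
        by (rule assoc_mult_mat) (use QC Rv PC Rw in auto)
      finally show ?thesis .
    qed
    also have "\<dots> = Q" using PQ RvRw QC Rw by simp
    finally show ?thesis unfolding e_def t_def .
  qed
  have inv: "invariant_form W d \<rho> (\<lambda>w. sign_char w * \<eta> w) Q"
    unfolding invariant_form_def
  proof (intro conjI QC ballI)
    fix w and x y :: "'k vec" assume w: "w \<in> W" and x: "x \<in> carrier_vec d" and y: "y \<in> carrier_vec d"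
    have "bform Q (\<rho> w *\<^sub>v x) (\<rho> w *\<^sub>v y) = bform ((\<rho> w)\<^sup>T * Q * \<rho> w) x y"
      using bform_via[OF RC[OF w] QC x y] .
    also have "\<dots> = (sign_char w * \<eta> w) * bform Q x y"
      unfolding key[OF w] bform_def using QC x y by (simp add: smult_mat_mult_vec)
    finally show "bform Q (\<rho> w *\<^sub>v x) (\<rho> w *\<^sub>v y) = sign_char w * \<eta> w * bform Q x y" .
  qed
  have nd: "nondegenerate d Q" unfolding nondegenerate_def
  proof (intro ballI impI)
    fix x :: "'k vec" assume x: "x \<in> carrier_vec d" and z: "\<forall>y\<in>carrier_vec d. bform Q x y = 0"
    show "x = 0\<^sub>v d"
    proof (rule eq_vecI)
      fix i assume i: "i < dim_vec (0\<^sub>v d :: 'k vec)"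
      have "bform Q x (P *\<^sub>v unit_vec d i) = 0" using z PC by simp
      moreover have "Q *\<^sub>v (P *\<^sub>v unit_vec d i) = unit_vec d i"
      proof -
        have "Q *\<^sub>v (P *\<^sub>v unit_vec d i) = (Q * P) *\<^sub>v unit_vec d i"
          by (rule assoc_mult_mat_vec[symmetric]) (use QC PC in auto)
        thus ?thesis using QP by simp
      qed
      ultimately show "x $ i = 0\<^sub>v d $ i" unfolding bform_def using x i by simp
    qed (use x in simp)
  qed
  show ?thesis using inv nd by (intro exI[of _ Q] conjI)
qed

lemma mat_inv_from_nondeg:
  assumes B: "B \<in> carrier_mat d d" and nd: "nondegenerate d (B :: 'k::field mat)"
  shows "det B \<noteq> 0"
proof
  assume "det B = 0"
  hence "det B\<^sup>T = 0" using det_transpose[OF B] by simp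
  then obtain v where v: "v \<in> carrier_vec d" "v \<noteq> 0\<^sub>v d" "B\<^sup>T *\<^sub>v v = 0\<^sub>v d"
    using det_0_iff_vec_prod_zero_field[of "B\<^sup>T" d] B by auto
  have "\<forall>y\<in>carrier_vec d. bform B v y = 0"
    using bform_left_zero[OF B v(1)] v by simp
  with nd v show False unfolding nondegenerate_def by auto
qed

lemma form_unique:
  assumes G: "finite_mat_group n W" and R: "is_rep n W d \<rho>"
    and k: "splitting_field_for TYPE('k::field) n W" and irr: "irreducible_rep n W d \<rho>"
    and chi: "\<And>w. w \<in> W \<Longrightarrow> \<chi> w * \<chi> w = (1::'k)"
    and B: "invariant_form W d \<rho> \<chi> B" and nd: "nondegenerate d B"
    and B': "invariant_form W d \<rho> \<chi> B'"
  shows "\<exists>c. B' = c \<cdot>\<^sub>m B"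
proof -
  have RC: "\<And>w. w \<in> W \<Longrightarrow> \<rho> w \<in> carrier_mat d d" using R unfolding is_rep_def by auto
  have BC: "B \<in> carrier_mat d d" and B'C: "B' \<in> carrier_mat d d"
    using B B' unfolding invariant_form_def by auto
  have matinv: "(\<rho> w)\<^sup>T * X * \<rho> w = \<chi> w \<cdot>\<^sub>m X"
    if w: "w \<in> W" and X: "invariant_form W d \<rho> \<chi> X" for w X
  proof (rule bform_eq_mat)
    have XC: "X \<in> carrier_mat d d" using X unfolding invariant_form_def by auto
    show "(\<rho> w)\<^sup>T * X * \<rho> w \<in> carrier_mat d d" using RC[OF w] XC by simp
    show "\<chi> w \<cdot>\<^sub>m X \<in> carrier_mat d d" using XC by simp
    fix x y :: "'k vec" assume x: "x \<in> carrier_vec d" and y: "y \<in> carrier_vec d"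
    have "bform ((\<rho> w)\<^sup>T * X * \<rho> w) x y = bform X (\<rho> w *\<^sub>v x) (\<rho> w *\<^sub>v y)"
      using bform_via[OF RC[OF w] XC x y] by simp
    also have "\<dots> = \<chi> w * bform X x y" using X w x y unfolding invariant_form_def by auto
    also have "\<dots> = bform (\<chi> w \<cdot>\<^sub>m X) x y" unfolding bform_def using XC x y
      by (simp add: smult_mat_mult_vec)
    finally show "bform ((\<rho> w)\<^sup>T * X * \<rho> w) x y = bform (\<chi> w \<cdot>\<^sub>m X) x y" .
  qed
  have dB: "det B \<noteq> 0" by (rule mat_inv_from_nondeg[OF BC nd])
  define Bi where "Bi = (1 / det B) \<cdot>\<^sub>m adj_mat B"
  have BiC: "Bi \<in> carrier_mat d d" unfolding Bi_def using adj_mat(1)[OF BC] by simp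
  have BBi: "B * Bi = 1\<^sub>m d" unfolding Bi_def using adj_mat[OF BC] dB BC
    by (simp add: mult_smult_distrib[of _ d d _ d] smult_smult_mat one_smult_mat')
  have BiB: "Bi * B = 1\<^sub>m d" unfolding Bi_def using adj_mat[OF BC] dB BC
    by (simp add: mult_smult_assoc_mat[of _ d d _ d] smult_smult_mat one_smult_mat')
  have BiBX: "Bi * (B * X) = X" if "X \<in> carrier_mat d d" for X
    using BiB that BiC BC by (simp add: assoc_mult_mat[symmetric, of Bi d d B d X d])
  have BBiX: "B * (Bi * X) = X" if "X \<in> carrier_mat d d" for X
    using BBi that BiC BC by (simp add: assoc_mult_mat[symmetric, of B d d Bi d X d])
  define A where "A = Bi * B'"
  have AC: "A \<in> carrier_mat d d" unfolding A_def using BiC B'C by simp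
  have comm: "A * \<rho> w = \<rho> w * A" if w: "w \<in> W" for w
  proof -
    define Ri where "Ri = \<rho> (grp_inv n W w)"
    define c where "c = \<chi> w"
    have cc: "c * c = 1" unfolding c_def using chi[OF w] .
    have Rw: "\<rho> w \<in> carrier_mat d d" using RC[OF w] .
    have RiC: "Ri \<in> carrier_mat d d" unfolding Ri_def using RC fmg_inv[OF G w] by auto
    have RRi: "\<rho> w * Ri = 1\<^sub>m d" and RiR: "Ri * \<rho> w = 1\<^sub>m d"
      unfolding Ri_def using rep_inv[OF G R w] by auto
    have RtC: "(\<rho> w)\<^sup>T \<in> carrier_mat d d" and RitC: "Ri\<^sup>T \<in> carrier_mat d d" using Rw RiC by auto
    have TT: "Ri\<^sup>T * (\<rho> w)\<^sup>T = 1\<^sub>m d"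
      using arg_cong[OF RRi, of transpose_mat] transpose_mult[OF Rw RiC] by simp
    have gen: "X * \<rho> w = c \<cdot>\<^sub>m (Ri\<^sup>T * X)" if X: "invariant_form W d \<rho> \<chi> X" for X
    proof -
      have XC: "X \<in> carrier_mat d d" using X unfolding invariant_form_def by auto
      have "X * \<rho> w = (Ri\<^sup>T * (\<rho> w)\<^sup>T) * (X * \<rho> w)" using TT XC Rw by simp
      also have "\<dots> = Ri\<^sup>T * ((\<rho> w)\<^sup>T * X * \<rho> w)"
        using XC Rw RiC RtC RitC by (simp add: assoc_mult_mat[of _ d d _ d _ d])
      also have "\<dots> = Ri\<^sup>T * (c \<cdot>\<^sub>m X)" using matinv[OF w X] c_def by simp
      also have "\<dots> = c \<cdot>\<^sub>m (Ri\<^sup>T * X)" using XC RiC by (simp add: mult_smult_distrib[of _ d d _ d])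
      finally show ?thesis .
    qed
    have e1: "B' * \<rho> w = c \<cdot>\<^sub>m (Ri\<^sup>T * B')" by (rule gen[OF B'])
    have e2: "B * \<rho> w = c \<cdot>\<^sub>m (Ri\<^sup>T * B)" by (rule gen[OF B])
    have e3: "\<rho> w * Bi = c \<cdot>\<^sub>m (Bi * Ri\<^sup>T)"
    proof -
      have "\<rho> w * Bi = Bi * (B * \<rho> w) * Bi" using BiBX Rw BiC BC by (simp add: assoc_mult_mat[of _ d d _ d _ d])
      also have "\<dots> = Bi * (c \<cdot>\<^sub>m (Ri\<^sup>T * B)) * Bi" unfolding e2 ..
      also have "\<dots> = c \<cdot>\<^sub>m (Bi * Ri\<^sup>T * (B * Bi))"
        using BiC RiC BC RitC by (simp add: mult_smult_distrib[of _ d d _ d] mult_smult_assoc_mat[of _ d d _ d] assoc_mult_mat[of _ d d _ d _ d])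
      also have "\<dots> = c \<cdot>\<^sub>m (Bi * Ri\<^sup>T)" using BBi BiC RiC RitC by simp
      finally show ?thesis .
    qed
    have "A * \<rho> w = Bi * (B' * \<rho> w)" unfolding A_def using BiC B'C Rw by (simp add: assoc_mult_mat[of _ d d _ d _ d])
    also have "\<dots> = c \<cdot>\<^sub>m (Bi * Ri\<^sup>T * B')" unfolding e1
      using BiC B'C RiC RitC by (simp add: mult_smult_distrib[of _ d d _ d] assoc_mult_mat[of _ d d _ d _ d])
    also have "Bi * Ri\<^sup>T = c \<cdot>\<^sub>m (\<rho> w * Bi)" using e3 cc by (simp add: smult_smult_mat one_smult_mat')
    also have "c \<cdot>\<^sub>m (c \<cdot>\<^sub>m (\<rho> w * Bi) * B') = \<rho> w * A" unfolding A_def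
      using BiC B'C Rw cc by (simp add: mult_smult_assoc_mat[of _ d d _ d] smult_smult_mat one_smult_mat' assoc_mult_mat[of _ d d _ d _ d])
    finally show ?thesis .
  qed
  from k irr AC comm obtain c where "A = c \<cdot>\<^sub>m 1\<^sub>m d"
    unfolding splitting_field_for_def by blast
  hence "B * A = c \<cdot>\<^sub>m B" using BC by (simp add: mult_smult_distrib[of _ d d _ d])
  moreover have "B * A = B'" unfolding A_def using BBi BC BiC B'C
    by (simp add: assoc_mult_mat[symmetric, of B d d Bi d B' d])
  ultimately show ?thesis by auto
qed

lemma rep_ext_carrier: "rep_ext W d \<rho> a \<in> carrier_mat d d"
  unfolding rep_ext_def by simp

lemma rep_ext_add: "rep_ext W d \<rho> (\<lambda>g. a g + b g) = rep_ext W d \<rho> a + rep_ext W d \<rho> b"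
  unfolding rep_ext_def by (rule eq_matI) (auto simp: sum.distrib algebra_simps)

lemma rep_ext_diff: "rep_ext W d \<rho> (\<lambda>g. a g - b g) = rep_ext W d \<rho> a - rep_ext W d \<rho> b"
  unfolding rep_ext_def by (rule eq_matI) (auto simp: sum_subtractf algebra_simps)

lemma rep_ext_smult: "rep_ext W d \<rho> (\<lambda>g. c * a g) = c \<cdot>\<^sub>m rep_ext W d \<rho> a"
  unfolding rep_ext_def by (rule eq_matI) (auto simp: sum_distrib_left algebra_simps)

lemma rep_ext_basis:
  assumes "finite W" "s \<in> W" "is_rep n W d \<rho>"
  shows "rep_ext W d \<rho> (ga_basis s) = \<rho> s"
proof -
  have sC: "\<rho> s \<in> carrier_mat d d" using assms unfolding is_rep_def by auto
  show ?thesis unfolding rep_ext_def ga_basis_def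
  proof (rule eq_matI)
    fix i j assume "i < dim_row (\<rho> s)" "j < dim_col (\<rho> s)"
    hence ij: "i < d" "j < d" using sC by auto
    have "(\<Sum>w\<in>W. (if w = s then 1 else 0) * \<rho> w $$ (i, j)) = (\<Sum>w\<in>W. if w = s then \<rho> w $$ (i, j) else 0)"
      by (rule sum.cong) auto
    also have "\<dots> = \<rho> s $$ (i,j)" using assms by (simp add: sum.delta')
    finally show "mat d d (\<lambda>(i, j). \<Sum>w\<in>W. (if w = s then 1 else 0) * \<rho> w $$ (i, j)) $$ (i, j) = \<rho> s $$ (i, j)"
      using ij by simp
  qed (use sC in auto)
qed

lemma rep_ext_mult:
  assumes G: "finite_mat_group n W" and R: "is_rep n W d \<rho>"
  shows "rep_ext W d \<rho> (ga_mult W a b) = rep_ext W d \<rho> a * rep_ext W d \<rho> (b :: complex mat \<Rightarrow> 'k::field)"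
proof (rule eq_matI)
  have fin: "finite W" and cl: "\<And>x y. x \<in> W \<Longrightarrow> y \<in> W \<Longrightarrow> x * y \<in> W"
    using G unfolding finite_mat_group_def by auto
  have RC: "\<And>w. w \<in> W \<Longrightarrow> \<rho> w \<in> carrier_mat d d" and Rm: "\<And>x y. x \<in> W \<Longrightarrow> y \<in> W \<Longrightarrow> \<rho> (x * y) = \<rho> x * \<rho> y"
    using R unfolding is_rep_def by auto
  fix i j assume ij: "i < dim_row (rep_ext W d \<rho> a * rep_ext W d \<rho> b)" "j < dim_col (rep_ext W d \<rho> a * rep_ext W d \<rho> b)"
  hence i: "i < d" and j: "j < d" unfolding rep_ext_def by auto
  have "rep_ext W d \<rho> (ga_mult W a b) $$ (i,j) =
      (\<Sum>g\<in>W. (\<Sum>x\<in>W. \<Sum>y\<in>W. if x * y = g then a x * b y else 0) * \<rho> g $$ (i,j))"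
    unfolding rep_ext_def ga_mult_def using i j by simp
  also have "\<dots> = (\<Sum>g\<in>W. \<Sum>x\<in>W. \<Sum>y\<in>W. if x * y = g then a x * b y * \<rho> g $$ (i,j) else 0)"
    by (simp add: sum_distrib_right) (intro sum.cong refl, simp)
  also have "\<dots> = (\<Sum>x\<in>W. \<Sum>y\<in>W. \<Sum>g\<in>W. if x * y = g then a x * b y * \<rho> g $$ (i,j) else 0)"
    by (subst sum.swap) (rule sum.cong[OF refl], rule sum.swap)
  also have "\<dots> = (\<Sum>x\<in>W. \<Sum>y\<in>W. a x * b y * \<rho> (x * y) $$ (i,j))"
    using fin cl by (intro sum.cong refl) (simp add: sum.delta)
  also have "\<dots> = (\<Sum>x\<in>W. \<Sum>y\<in>W. \<Sum>k<d. a x * b y * (\<rho> x $$ (i,k) * \<rho> y $$ (k,j)))"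
  proof (intro sum.cong refl)
    fix x y assume x: "x \<in> W" and y: "y \<in> W"
    have "\<rho> (x * y) $$ (i,j) = (\<Sum>k<d. \<rho> x $$ (i,k) * \<rho> y $$ (k,j))"
      using Rm[OF x y] RC[OF x] RC[OF y] i j
      by (simp add: scalar_prod_def atLeast0LessThan)
    thus "a x * b y * \<rho> (x * y) $$ (i,j) = (\<Sum>k<d. a x * b y * (\<rho> x $$ (i,k) * \<rho> y $$ (k,j)))"
      by (simp add: sum_distrib_left)
  qed
  also have "\<dots> = (\<Sum>k<d. (\<Sum>x\<in>W. a x * \<rho> x $$ (i,k)) * (\<Sum>y\<in>W. b y * \<rho> y $$ (k,j)))"
    by (simp add: sum_product sum.swap[of _ "{..<d}"] ac_simps)
  also have "\<dots> = (rep_ext W d \<rho> a * rep_ext W d \<rho> b) $$ (i,j)"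
    unfolding rep_ext_def using i j by (simp add: scalar_prod_def atLeast0LessThan)
  finally show "rep_ext W d \<rho> (ga_mult W a b) $$ (i,j) = (rep_ext W d \<rho> a * rep_ext W d \<rho> b) $$ (i,j)" .
qed (auto simp: rep_ext_def)

lemma rep_ext_bracket:
  assumes G: "finite_mat_group n W" and R: "is_rep n W d \<rho>"
  shows "rep_ext W d \<rho> (ga_bracket W a b) = rep_ext W d \<rho> a * rep_ext W d \<rho> b - rep_ext W d \<rho> b * rep_ext W d \<rho> (a :: complex mat \<Rightarrow> 'k::field)"
  unfolding ga_bracket_def rep_ext_diff rep_ext_mult[OF G R] ..

definition skewc :: "'k::field mat \<Rightarrow> nat \<Rightarrow> 'k mat \<Rightarrow> 'k \<Rightarrow> bool" where
  "skewc B d u c \<longleftrightarrow> (\<forall>x\<in>carrier_vec d. \<forall>y\<in>carrier_vec d. bform B (u *\<^sub>v x) y + bform B x (u *\<^sub>v y) = c * bform B x y)"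

lemma bf_addL: "B \<in> carrier_mat d d \<Longrightarrow> x \<in> carrier_vec d \<Longrightarrow> y \<in> carrier_vec d \<Longrightarrow>
  U \<in> carrier_mat d d \<Longrightarrow> V \<in> carrier_mat d d \<Longrightarrow>
  bform B ((U + V) *\<^sub>v x) y = bform B (U *\<^sub>v x) y + bform B (V *\<^sub>v x) (y :: 'k::field vec)"
  unfolding bform_def by (simp add: add_mult_distrib_mat_vec add_scalar_prod_distrib[of _ d])

lemma bf_addR: "B \<in> carrier_mat d d \<Longrightarrow> x \<in> carrier_vec d \<Longrightarrow> y \<in> carrier_vec d \<Longrightarrow>
  U \<in> carrier_mat d d \<Longrightarrow> V \<in> carrier_mat d d \<Longrightarrow>
  bform B x ((U + V) *\<^sub>v y) = bform B x (U *\<^sub>v y) + bform B x (V *\<^sub>v (y :: 'k::field vec))"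
  unfolding bform_def by (simp add: add_mult_distrib_mat_vec mult_add_distrib_mat_vec[of B d d] scalar_prod_add_distrib[of _ d])

lemma bf_minusL: "B \<in> carrier_mat d d \<Longrightarrow> x \<in> carrier_vec d \<Longrightarrow> y \<in> carrier_vec d \<Longrightarrow>
  U \<in> carrier_mat d d \<Longrightarrow> V \<in> carrier_mat d d \<Longrightarrow>
  bform B ((U - V) *\<^sub>v x) y = bform B (U *\<^sub>v x) y - bform B (V *\<^sub>v x) (y :: 'k::field vec)"
  unfolding bform_def by (simp add: minus_mult_distrib_mat_vec minus_scalar_prod_distrib[of _ d])

lemma bf_minusR: "B \<in> carrier_mat d d \<Longrightarrow> x \<in> carrier_vec d \<Longrightarrow> y \<in> carrier_vec d \<Longrightarrow>
  U \<in> carrier_mat d d \<Longrightarrow> V \<in> carrier_mat d d \<Longrightarrow>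
  bform B x ((U - V) *\<^sub>v y) = bform B x (U *\<^sub>v y) - bform B x (V *\<^sub>v (y :: 'k::field vec))"
  unfolding bform_def by (simp add: minus_mult_distrib_mat_vec mult_minus_distrib_mat_vec[of B d d] scalar_prod_minus_distrib[of _ d])

lemma bf_smultL: "B \<in> carrier_mat d d \<Longrightarrow> x \<in> carrier_vec d \<Longrightarrow> y \<in> carrier_vec d \<Longrightarrow>
  U \<in> carrier_mat d d \<Longrightarrow>
  bform B ((a \<cdot>\<^sub>m U) *\<^sub>v x) y = a * bform B (U *\<^sub>v x) (y :: 'k::field vec)"
  unfolding bform_def by (simp add: smult_mat_mult_vec)

lemma bf_smultR: "B \<in> carrier_mat d d \<Longrightarrow> x \<in> carrier_vec d \<Longrightarrow> y \<in> carrier_vec d \<Longrightarrow>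
  U \<in> carrier_mat d d \<Longrightarrow>
  bform B x ((a \<cdot>\<^sub>m U) *\<^sub>v y) = a * bform B x (U *\<^sub>v (y :: 'k::field vec))"
  unfolding bform_def by (simp add: smult_mat_mult_vec mult_mat_vec[of B d d])

lemma skew_add:
  assumes "B \<in> carrier_mat d d" "U \<in> carrier_mat d d" "V \<in> carrier_mat d d"
    "skewc B d U c1" "skewc B d V c2"
  shows "skewc B d (U + V) (c1 + c2)"
  unfolding skewc_def
proof (intro ballI)
  fix x y :: "'a vec" assume x: "x \<in> carrier_vec d" and y: "y \<in> carrier_vec d"
  from assms(4,5) x y have "bform B (U *\<^sub>v x) y + bform B x (U *\<^sub>v y) = c1 * bform B x y"
    "bform B (V *\<^sub>v x) y + bform B x (V *\<^sub>v y) = c2 * bform B x y" unfolding skewc_def by auto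
  thus "bform B ((U + V) *\<^sub>v x) y + bform B x ((U + V) *\<^sub>v y) = (c1 + c2) * bform B x y"
    using bf_addL[OF assms(1) x y assms(2,3)] bf_addR[OF assms(1) x y assms(2,3)]
    by (simp add: algebra_simps)
qed

lemma skew_smult:
  assumes "B \<in> carrier_mat d d" "U \<in> carrier_mat d d" "skewc B d U c"
  shows "skewc B d (a \<cdot>\<^sub>m U) (a * c)"
  unfolding skewc_def
proof (intro ballI)
  fix x y :: "'a vec" assume x: "x \<in> carrier_vec d" and y: "y \<in> carrier_vec d"
  from assms(3) x y have "bform B (U *\<^sub>v x) y + bform B x (U *\<^sub>v y) = c * bform B x y"
    unfolding skewc_def by auto
  hence "a * (bform B (U *\<^sub>v x) y + bform B x (U *\<^sub>v y)) = a * (c * bform B x y)" by simp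
  thus "bform B ((a \<cdot>\<^sub>m U) *\<^sub>v x) y + bform B x ((a \<cdot>\<^sub>m U) *\<^sub>v y) = (a * c) * bform B x y"
    using bf_smultL[OF assms(1) x y assms(2)] bf_smultR[OF assms(1) x y assms(2)]
    by (simp add: algebra_simps)
qed

lemma skew_comm:
  assumes B: "B \<in> carrier_mat d d" and U: "U \<in> carrier_mat d d" and V: "V \<in> carrier_mat d d"
    and sU: "skewc B d U c1" and sV: "skewc B d V c2"
  shows "skewc B d (U * V - V * U) 0"
  unfolding skewc_def
proof (intro ballI)
  fix x y :: "'a vec" assume x: "x \<in> carrier_vec d" and y: "y \<in> carrier_vec d"
  have Ux: "U *\<^sub>v x \<in> carrier_vec d" and Vx: "V *\<^sub>v x \<in> carrier_vec d"
    and Uy: "U *\<^sub>v y \<in> carrier_vec d" and Vy: "V *\<^sub>v y \<in> carrier_vec d" using U V x y by auto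
  have UV: "U * V \<in> carrier_mat d d" and VU: "V * U \<in> carrier_mat d d" using U V by auto
  have a: "bform B (U *\<^sub>v (V *\<^sub>v x)) y + bform B (V *\<^sub>v x) (U *\<^sub>v y) = c1 * bform B (V *\<^sub>v x) y"
    using sU Vx y unfolding skewc_def by auto
  have b: "bform B (V *\<^sub>v x) (U *\<^sub>v y) + bform B x (V *\<^sub>v (U *\<^sub>v y)) = c2 * bform B x (U *\<^sub>v y)"
    using sV x Uy unfolding skewc_def by auto
  have c: "bform B (V *\<^sub>v (U *\<^sub>v x)) y + bform B (U *\<^sub>v x) (V *\<^sub>v y) = c2 * bform B (U *\<^sub>v x) y"
    using sV Ux y unfolding skewc_def by auto
  have d: "bform B (U *\<^sub>v x) (V *\<^sub>v y) + bform B x (U *\<^sub>v (V *\<^sub>v y)) = c1 * bform B x (V *\<^sub>v y)"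
    using sU x Vy unfolding skewc_def by auto
  have e: "bform B (U *\<^sub>v x) y + bform B x (U *\<^sub>v y) = c1 * bform B x y"
    using sU x y unfolding skewc_def by auto
  have f: "bform B (V *\<^sub>v x) y + bform B x (V *\<^sub>v y) = c2 * bform B x y"
    using sV x y unfolding skewc_def by auto
  have l: "bform B ((U * V - V * U) *\<^sub>v x) y = bform B (U *\<^sub>v (V *\<^sub>v x)) y - bform B (V *\<^sub>v (U *\<^sub>v x)) y"
    using bf_minusL[OF B x y UV VU] U V x by (simp add: assoc_mult_mat_vec)
  have r: "bform B x ((U * V - V * U) *\<^sub>v y) = bform B x (U *\<^sub>v (V *\<^sub>v y)) - bform B x (V *\<^sub>v (U *\<^sub>v y))"
    using bf_minusR[OF B x y UV VU] U V y by (simp add: assoc_mult_mat_vec)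
  show "bform B ((U * V - V * U) *\<^sub>v x) y + bform B x ((U * V - V * U) *\<^sub>v y) = 0 * bform B x y"
    unfolding l r
  proof -
    have g1: "bform B (U *\<^sub>v (V *\<^sub>v x)) y - bform B (V *\<^sub>v (U *\<^sub>v x)) y +
        (bform B x (U *\<^sub>v (V *\<^sub>v y)) - bform B x (V *\<^sub>v (U *\<^sub>v y)))
      = c1 * bform B (V *\<^sub>v x) y + c1 * bform B x (V *\<^sub>v y) - (c2 * bform B (U *\<^sub>v x) y + c2 * bform B x (U *\<^sub>v y))"
      unfolding a[symmetric] b[symmetric] c[symmetric] d[symmetric] by (simp add: algebra_simps)
    also have "\<dots> = c1 * (bform B (V *\<^sub>v x) y + bform B x (V *\<^sub>v y)) - c2 * (bform B (U *\<^sub>v x) y + bform B x (U *\<^sub>v y))"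
      by (simp add: algebra_simps)
    also have "\<dots> = 0 * bform B x y" unfolding e f by simp
    finally show "bform B (U *\<^sub>v (V *\<^sub>v x)) y - bform B (V *\<^sub>v (U *\<^sub>v x)) y +
        (bform B x (U *\<^sub>v (V *\<^sub>v y)) - bform B x (V *\<^sub>v (U *\<^sub>v y))) = 0 * bform B x y" .
  qed
qed

lemma smult_one_mult_vec: "y \<in> carrier_vec d \<Longrightarrow> (a \<cdot>\<^sub>m 1\<^sub>m d) *\<^sub>v y = a \<cdot>\<^sub>v (y :: 'a::comm_ring_1 vec)"
  using smult_mat_mult_vec[of "1\<^sub>m d" d d y a] by simp

lemma skew_scalar: "B \<in> carrier_mat d d \<Longrightarrow> skewc B d (a \<cdot>\<^sub>m 1\<^sub>m d) (2 * (a::'k::field))"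
  unfolding skewc_def bform_def
proof (intro ballI)
  fix x y :: "'k vec" assume B: "B \<in> carrier_mat d d" and x: "x \<in> carrier_vec d" and y: "y \<in> carrier_vec d"
  have By: "B *\<^sub>v y \<in> carrier_vec d" using B y by simp
  show "(a \<cdot>\<^sub>m 1\<^sub>m d *\<^sub>v x) \<bullet> (B *\<^sub>v y) + x \<bullet> (B *\<^sub>v (a \<cdot>\<^sub>m 1\<^sub>m d *\<^sub>v y)) = 2 * a * (x \<bullet> (B *\<^sub>v y))"
    unfolding smult_one_mult_vec[OF x] smult_one_mult_vec[OF y] mult_mat_vec[OF B y]
    using x By by (simp add: algebra_simps)
qed

lemma trace_comm0:
  assumes "A \<in> carrier_mat d d" "B \<in> carrier_mat d d"
  shows "mat_trace (A * B - B * (A :: 'k::field mat)) = 0"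
proof -
  have "mat_trace (A * B) = (\<Sum>i<d. \<Sum>k<d. A $$ (i,k) * B $$ (k,i))"
    unfolding mat_trace_def using assms by (auto simp: scalar_prod_def atLeast0LessThan)
  moreover have "mat_trace (B * A) = (\<Sum>i<d. \<Sum>k<d. B $$ (i,k) * A $$ (k,i))"
    unfolding mat_trace_def using assms by (auto simp: scalar_prod_def atLeast0LessThan)
  moreover have "(\<Sum>i<d. \<Sum>k<d. A $$ (i,k) * B $$ (k,i)) = (\<Sum>i<d. \<Sum>k<d. B $$ (i,k) * A $$ (k,i))"
    by (subst sum.swap) (simp add: mult.commute)
  moreover have "mat_trace (A * B - B * A) = mat_trace (A * B) - mat_trace (B * A)"
    unfolding mat_trace_def using assms by (simp add: sum_subtractf)
  ultimately show ?thesis by simp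
qed

lemma trace_add: "A \<in> carrier_mat d d \<Longrightarrow> B \<in> carrier_mat d d \<Longrightarrow> mat_trace (A + B) = mat_trace A + mat_trace (B :: 'k::field mat)"
  unfolding mat_trace_def by (simp add: sum.distrib)

lemma trace_smult: "A \<in> carrier_mat d d \<Longrightarrow> mat_trace (a \<cdot>\<^sub>m A) = a * mat_trace (A :: 'k::field mat)"
  unfolding mat_trace_def by (auto simp: sum_distrib_left intro!: sum.cong)

lemma refl_props:
  assumes W: "finite_reflection_group n W" and R: "is_rep n W d \<rho>" and s: "s \<in> reflections n W"
  shows "s \<in> W" "(sign_char s :: 'k::field) = -1" "\<rho> s * \<rho> s = (1\<^sub>m d :: 'k mat)" "\<rho> s \<in> carrier_mat d d"
proof -
  show sW: "s \<in> W" using s unfolding reflections_def by auto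
  have "is_reflection n s" using s unfolding reflections_def by auto
  hence "det s = -1" by (rule refl_det)
  thus "(sign_char s :: 'k::field) = -1" unfolding sign_char_def by simp
  have ss: "s * s = 1\<^sub>m n" using s unfolding reflections_def is_reflection_def by auto
  have G: "finite_mat_group n W" using W unfolding finite_reflection_group_def by auto
  hence o: "1\<^sub>m n \<in> W" unfolding finite_mat_group_def by auto
  from R sW have "\<rho> (s * s) = \<rho> s * \<rho> s" "\<rho> (1\<^sub>m n) = 1\<^sub>m d" unfolding is_rep_def by auto
  thus "\<rho> s * \<rho> s = (1\<^sub>m d :: 'k mat)" using ss by simp
  show "\<rho> s \<in> carrier_mat d d" using R sW unfolding is_rep_def by auto
qed

lemma refl_skew:
  assumes W: "finite_reflection_group n W" and R: "is_rep n W d \<rho>" and eta: "\<eta> \<in> X_set n W d \<rho>"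
    and Bi: "invariant_form W d \<rho> (\<lambda>w. sign_char w * \<eta> w) (B :: 'k::field mat)"
    and s: "s \<in> reflections n W"
  shows "\<exists>c. skewc B d (\<rho> s) c"
proof -
  note p = refl_props[OF W R s]
  have BC: "B \<in> carrier_mat d d" using Bi unfolding invariant_form_def by auto
  have h: "sign_hom W \<eta>" and X: "\<eta> s = -1 \<Longrightarrow> \<rho> s = 1\<^sub>m d \<or> \<rho> s = - (1\<^sub>m d)"
    using eta s unfolding X_set_def by auto
  have "\<eta> s = 1 \<or> \<eta> s = -1" using h p(1) unfolding sign_hom_def by auto
  thus ?thesis
  proof
    assume e: "\<eta> s = -1"
    from X[OF e] show ?thesis
    proof
      assume "\<rho> s = 1\<^sub>m d"
      hence "\<rho> s = 1 \<cdot>\<^sub>m 1\<^sub>m d" by (simp add: one_smult_mat')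
      thus ?thesis using skew_scalar[OF BC, of 1] by auto
    next
      assume "\<rho> s = - (1\<^sub>m d)"
      hence "\<rho> s = (-1) \<cdot>\<^sub>m 1\<^sub>m d" by (auto intro!: eq_matI)
      thus ?thesis using skew_scalar[OF BC, of "-1"] by auto
    qed
  next
    assume e: "\<eta> s = 1"
    let ?S = "\<rho> s"
    have inv: "bform B (?S *\<^sub>v x) (?S *\<^sub>v y) = - bform B x y" if "x \<in> carrier_vec d" "y \<in> carrier_vec d" for x y
      using Bi p(1,2) e that unfolding invariant_form_def by auto
    have SS: "?S *\<^sub>v (?S *\<^sub>v y) = y" if "y \<in> carrier_vec d" for y
    proof -
      have "?S *\<^sub>v (?S *\<^sub>v y) = (?S * ?S) *\<^sub>v y" by (rule assoc_mult_mat_vec[symmetric]) (use p(4) that in auto)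
      thus ?thesis using p(3) that by simp
    qed
    have "skewc B d ?S 0" unfolding skewc_def
    proof (intro ballI)
      fix x y :: "'k vec" assume x: "x \<in> carrier_vec d" and y: "y \<in> carrier_vec d"
      have Sy: "?S *\<^sub>v y \<in> carrier_vec d" using p(4) y by simp
      have "bform B (?S *\<^sub>v x) y = bform B (?S *\<^sub>v x) (?S *\<^sub>v (?S *\<^sub>v y))" using SS[OF y] by simp
      also have "\<dots> = - bform B x (?S *\<^sub>v y)" using inv[OF x Sy] .
      finally show "bform B (?S *\<^sub>v x) y + bform B x (?S *\<^sub>v y) = 0 * bform B x y" by simp
    qed
    thus ?thesis by blast
  qed
qed

lemma lieH_skew:
  assumes W: "finite_reflection_group n W" and R: "is_rep n W d \<rho>" and eta: "\<eta> \<in> X_set n W d \<rho>"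
    and Bi: "invariant_form W d \<rho> (\<lambda>w. sign_char w * \<eta> w) (B :: 'k::field mat)"
    and a: "a \<in> lie_H n W"
  shows "\<exists>c. skewc B d (rep_ext W d \<rho> a) c"
  using a
proof (induction rule: lie_H.induct)
  case (gen s)
  have G: "finite_mat_group n W" using W unfolding finite_reflection_group_def by auto
  have "s \<in> W" using gen unfolding reflections_def by auto
  hence "rep_ext W d \<rho> (ga_basis s) = \<rho> s" using G R by (intro rep_ext_basis) (auto simp: finite_mat_group_def)
  thus ?case using refl_skew[OF W R eta Bi gen] by simp
next
  case (add a b)
  have BC: "B \<in> carrier_mat d d" using Bi unfolding invariant_form_def by auto
  from add obtain c1 c2 where "skewc B d (rep_ext W d \<rho> a) c1" "skewc B d (rep_ext W d \<rho> b) c2" by auto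
  thus ?case unfolding rep_ext_add using skew_add[OF BC rep_ext_carrier rep_ext_carrier] by blast
next
  case (smult a c)
  have BC: "B \<in> carrier_mat d d" using Bi unfolding invariant_form_def by auto
  from smult obtain c1 where "skewc B d (rep_ext W d \<rho> a) c1" by auto
  thus ?case unfolding rep_ext_smult using skew_smult[OF BC rep_ext_carrier] by blast
next
  case (bracket a b)
  have BC: "B \<in> carrier_mat d d" using Bi unfolding invariant_form_def by auto
  have G: "finite_mat_group n W" using W unfolding finite_reflection_group_def by auto
  from bracket obtain c1 c2 where "skewc B d (rep_ext W d \<rho> a) c1" "skewc B d (rep_ext W d \<rho> b) c2" by auto
  thus ?case unfolding rep_ext_bracket[OF G R] using skew_comm[OF BC rep_ext_carrier rep_ext_carrier] by blast
qed

lemma osp_part: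
  assumes W: "finite_reflection_group n W" and R: "is_rep n W d \<rho>" and eta: "\<eta> \<in> X_set n W d \<rho>"
    and Bi: "invariant_form W d \<rho> (\<lambda>w. sign_char w * \<eta> w) (B :: 'k::field mat)"
  shows "\<forall>a \<in> lie_H' n W. in_osp d B (rep_ext W d \<rho> a)"
proof
  fix a :: "complex mat \<Rightarrow> 'k" assume a: "a \<in> lie_H' n W"
  have BC: "B \<in> carrier_mat d d" using Bi unfolding invariant_form_def by auto
  have G: "finite_mat_group n W" using W unfolding finite_reflection_group_def by auto
  have "skewc B d (rep_ext W d \<rho> a) 0 \<and> mat_trace (rep_ext W d \<rho> a) = 0"
    using a
  proof (induction rule: lie_H'.induct)
    case zero
    have "rep_ext W d \<rho> (\<lambda>g. 0) = 0 \<cdot>\<^sub>m 1\<^sub>m d" unfolding rep_ext_def by (rule eq_matI) auto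
    moreover have "mat_trace (0 \<cdot>\<^sub>m 1\<^sub>m d :: 'k mat) = 0" unfolding mat_trace_def by simp
    ultimately show ?case using skew_scalar[OF BC, of 0] by simp
  next
    case (bracket a b)
    from lieH_skew[OF W R eta Bi bracket(1)] lieH_skew[OF W R eta Bi bracket(2)]
    obtain c1 c2 where "skewc B d (rep_ext W d \<rho> a) c1" "skewc B d (rep_ext W d \<rho> b) c2" by auto
    thus ?case unfolding rep_ext_bracket[OF G R]
      using skew_comm[OF BC rep_ext_carrier rep_ext_carrier] trace_comm0[OF rep_ext_carrier rep_ext_carrier] by blast
  next
    case (add a b)
    thus ?case unfolding rep_ext_add using skew_add[OF BC rep_ext_carrier rep_ext_carrier, of W \<rho> a 0 W \<rho> b 0]
      trace_add[OF rep_ext_carrier[of W d \<rho> a] rep_ext_carrier[of W d \<rho> b]] by simp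
  next
    case (smult a c)
    thus ?case unfolding rep_ext_smult using skew_smult[OF BC rep_ext_carrier, of W \<rho> a 0 c]
      trace_smult[OF rep_ext_carrier[of W d \<rho> a]] by simp
  qed
  thus "in_osp d B (rep_ext W d \<rho> a)" unfolding in_osp_def skewc_def using rep_ext_carrier by auto
qed

lemma iso_scalar:
  assumes P: "P \<in> carrier_mat d d" "invertible_mat (P :: 'k::field mat)"
    and X: "X \<in> carrier_mat d d" and eq: "P * X = (a \<cdot>\<^sub>m 1\<^sub>m d) * P"
  shows "X = a \<cdot>\<^sub>m 1\<^sub>m d"
proof -
  obtain Q where Q: "Q \<in> carrier_mat d d" "P * Q = 1\<^sub>m d" "Q * P = 1\<^sub>m d" using inv_obtain[OF P] by blast
  have "X = (Q * P) * X" using Q X by simp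
  also have "\<dots> = Q * (P * X)" by (rule assoc_mult_mat) (use Q P X in auto)
  also have "\<dots> = Q * (a \<cdot>\<^sub>m P)" unfolding eq using P mult_smult_assoc_mat[of "1\<^sub>m d" d d P d a] by simp
  also have "\<dots> = a \<cdot>\<^sub>m (Q * P)" by (rule mult_smult_distrib) (use Q P in auto)
  finally show ?thesis using Q by simp
qed

lemma eta_unique:
  assumes W: "finite_reflection_group n W" and R: "is_rep n W d \<rho>" and d: "d > 0"
    and eta: "\<eta> \<in> X_set n W d \<rho>" and eta': "\<eta>' \<in> X_set n W d \<rho>"
    and iso: "rep_iso W d (twist (dual_rep n W \<rho>) sign_char) (twist \<rho> (\<eta> :: complex mat \<Rightarrow> 'k::field))"
    and iso': "rep_iso W d (twist (dual_rep n W \<rho>) sign_char) (twist \<rho> \<eta>')"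
  shows "\<forall>w\<in>W. \<eta>' w = \<eta> w"
proof -
  have G: "finite_mat_group n W" using W unfolding finite_reflection_group_def by auto
  have h: "sign_hom W \<eta>" and h': "sign_hom W \<eta>'" using eta eta' unfolding X_set_def by auto
  have RC: "\<And>w. w \<in> W \<Longrightarrow> \<rho> w \<in> carrier_mat d d" using R unfolding is_rep_def by auto
  have refl: "\<eta>' s = \<eta> s" if s: "s \<in> reflections n W" for s
  proof -
    have sW: "s \<in> W" using s unfolding reflections_def by auto
    have v: "\<eta> s = 1 \<or> \<eta> s = -1" "\<eta>' s = 1 \<or> \<eta>' s = -1" using h h' sW unfolding sign_hom_def by auto
    have XC: "twist (dual_rep n W \<rho>) sign_char s \<in> carrier_mat d d"
      unfolding twist_def dual_rep_def using RC fmg_inv[OF G sW] by auto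
    show ?thesis
    proof (cases "\<rho> s = 1\<^sub>m d \<or> \<rho> s = - (1\<^sub>m d)")
      case False
      hence "\<eta> s = 1" "\<eta>' s = 1" using eta eta' s v unfolding X_set_def by auto
      thus ?thesis by simp
    next
      case True
      then obtain \<sigma> where sig: "\<rho> s = \<sigma> \<cdot>\<^sub>m 1\<^sub>m d" "\<sigma> \<noteq> 0"
      proof -
        have "- (1\<^sub>m d) = (-1::'k) \<cdot>\<^sub>m 1\<^sub>m d" by (rule eq_matI) auto
        moreover have "1\<^sub>m d = (1::'k) \<cdot>\<^sub>m 1\<^sub>m d" by (simp add: one_smult_mat')
        ultimately show ?thesis using True that by (metis one_neq_zero neg_equal_0_iff_equal)
      qed
      have gen: "twist (dual_rep n W \<rho>) sign_char s = (e * \<sigma>) \<cdot>\<^sub>m 1\<^sub>m d"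
        if iso: "rep_iso W d (twist (dual_rep n W \<rho>) sign_char) (twist \<rho> e')" and e: "e' s = e" for e' e
      proof -
        from iso obtain P where P: "P \<in> carrier_mat d d" "invertible_mat P"
          and PI: "P * twist (dual_rep n W \<rho>) sign_char s = twist \<rho> e' s * P"
          unfolding rep_iso_def using sW by auto
        have "twist \<rho> e' s = (e * \<sigma>) \<cdot>\<^sub>m 1\<^sub>m d" unfolding twist_def e sig by (simp add: smult_smult_mat)
        with PI have "P * twist (dual_rep n W \<rho>) sign_char s = ((e * \<sigma>) \<cdot>\<^sub>m 1\<^sub>m d) * P" by simp
        thus ?thesis by (rule iso_scalar[OF P XC])
      qed
      have "(\<eta> s * \<sigma>) \<cdot>\<^sub>m 1\<^sub>m d = (\<eta>' s * \<sigma>) \<cdot>\<^sub>m (1\<^sub>m d :: 'k mat)"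
        using gen[OF iso refl] gen[OF iso' refl] by simp
      from arg_cong[OF this, of "\<lambda>M. M $$ (0,0)"] d have "\<eta> s * \<sigma> = \<eta>' s * \<sigma>" by simp
      thus ?thesis using sig(2) by simp
    qed
  qed
  show ?thesis
  proof
    fix w assume w: "w \<in> W"
    show "\<eta>' w = \<eta> w"
    proof (rule gen_induct[OF W _ _ w])
      show "\<eta>' (1\<^sub>m n) = \<eta> (1\<^sub>m n)" using sign_hom_one[OF G h] sign_hom_one[OF G h'] by simp
    next
      fix s x assume s: "s \<in> reflections n W" and x: "x \<in> W" and IH: "\<eta>' x = \<eta> x"
      have sW: "s \<in> W" using s unfolding reflections_def by auto
      show "\<eta>' (s * x) = \<eta> (s * x)" using h h' sW x IH refl[OF s] unfolding sign_hom_def by metis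
    qed
  qed
qed

lemma mult_one_le:
  assumes A: "A \<in> carrier_mat p q" and M: "M \<in> carrier_mat q p" and AM: "A * M = (1\<^sub>m p :: 'k::field mat)"
  shows "p \<le> q"
proof (rule ccontr)
  assume "\<not> p \<le> q"
  hence qp: "q < p" by simp
  define A' where "A' = mat p p (\<lambda>(i,j). if j < q then A $$ (i,j) else 0)"
  define M' where "M' = mat p p (\<lambda>(i,j). if i < q then M $$ (i,j) else 0)"
  have A'C: "A' \<in> carrier_mat p p" and M'C: "M' \<in> carrier_mat p p" unfolding A'_def M'_def by auto
  have "A' * M' = A * M"
  proof (rule eq_matI)
    fix i j assume ij: "i < dim_row (A * M)" "j < dim_col (A * M)"
    hence i: "i < p" and j: "j < p" using A M by auto
    have "(A' * M') $$ (i,j) = (\<Sum>l\<in>{0..<p}. (if l < q then A $$ (i,l) else 0) * (if l < q then M $$ (l,j) else 0))"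
      unfolding A'_def M'_def using i j by (simp add: scalar_prod_def)
    also have "\<dots> = (\<Sum>l\<in>{0..<q}. (if l < q then A $$ (i,l) else 0) * (if l < q then M $$ (l,j) else 0))"
      by (rule sum.mono_neutral_right) (use qp in auto)
    also have "\<dots> = (\<Sum>l\<in>{0..<q}. A $$ (i,l) * M $$ (l,j))" by (rule sum.cong) auto
    also have "\<dots> = (A * M) $$ (i,j)" using A M i j by (simp add: scalar_prod_def)
    finally show "(A' * M') $$ (i,j) = (A * M) $$ (i,j)" .
  qed (use A M A'C M'C in auto)
  hence "det (A' * M') = 1" using AM by simp
  hence "det A' * det M' = 1" using det_mult[OF A'C M'C] by simp
  moreover have "det A' = 0"
  proof -
    have "A' *\<^sub>v unit_vec p (p - 1) = 0\<^sub>v p"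
      unfolding A'_def using qp by (intro eq_vecI) (auto simp: scalar_prod_def intro!: sum.neutral)
    moreover have "unit_vec p (p - 1) \<noteq> (0\<^sub>v p :: 'k vec)" using qp by simp
    ultimately show ?thesis using det_0_iff_vec_prod_zero_field[OF A'C] by (metis unit_vec_carrier)
  qed
  ultimately show False by simp
qed

lemma lc_sp:
  assumes x: "x \<in> carrier_vec d" and w: "w \<in> carrier_vec d"
    and e: "\<And>i. i < k \<Longrightarrow> e i \<in> carrier_vec d" and f: "\<And>i. i < k \<Longrightarrow> f i \<in> carrier_vec d"
  shows "vec d (\<lambda>r. x $ r - (\<Sum>i<k. \<alpha> i * e i $ r + \<beta> i * f i $ r)) \<bullet> w
     = x \<bullet> w - (\<Sum>i<k. \<alpha> i * (e i \<bullet> w) + \<beta> i * (f i \<bullet> (w :: 'k::field vec)))"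
proof -
  have "vec d (\<lambda>r. x $ r - (\<Sum>i<k. \<alpha> i * e i $ r + \<beta> i * f i $ r)) \<bullet> w
     = (\<Sum>r\<in>{0..<d}. (x $ r - (\<Sum>i<k. \<alpha> i * e i $ r + \<beta> i * f i $ r)) * w $ r)"
    unfolding scalar_prod_def using w by simp
  also have "\<dots> = (\<Sum>r\<in>{0..<d}. x $ r * w $ r) - (\<Sum>r\<in>{0..<d}. \<Sum>i<k. \<alpha> i * (e i $ r * w $ r) + \<beta> i * (f i $ r * w $ r))"
  proof -
    have "\<And>r. (\<Sum>i<k. \<alpha> i * e i $ r + \<beta> i * f i $ r) * w $ r = (\<Sum>i<k. \<alpha> i * (e i $ r * w $ r) + \<beta> i * (f i $ r * w $ r))"
      by (subst sum_distrib_right) (rule sum.cong, auto simp: algebra_simps)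
    thus ?thesis by (simp add: left_diff_distrib sum_subtractf)
  qed
  also have "(\<Sum>r\<in>{0..<d}. \<Sum>i<k. \<alpha> i * (e i $ r * w $ r) + \<beta> i * (f i $ r * w $ r))
     = (\<Sum>i<k. \<Sum>r\<in>{0..<d}. \<alpha> i * (e i $ r * w $ r) + \<beta> i * (f i $ r * w $ r))"
    by (rule sum.swap)
  also have "\<dots> = (\<Sum>i<k. \<alpha> i * (e i \<bullet> w) + \<beta> i * (f i \<bullet> w))"
  proof (rule sum.cong[OF refl])
    fix i assume "i \<in> {..<k}"
    hence "e i \<in> carrier_vec d" "f i \<in> carrier_vec d" using e f by auto
    thus "(\<Sum>r\<in>{0..<d}. \<alpha> i * (e i $ r * w $ r) + \<beta> i * (f i $ r * w $ r)) = \<alpha> i * (e i \<bullet> w) + \<beta> i * (f i \<bullet> w)"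
      unfolding scalar_prod_def using w by (simp add: sum.distrib sum_distrib_left)
  qed
  finally show ?thesis unfolding scalar_prod_def using x w by simp
qed

lemma lc_mat_vec:
  assumes A: "(A :: 'k::field mat) \<in> carrier_mat d d" and x: "x \<in> carrier_vec d"
    and e: "\<And>i. i < k \<Longrightarrow> e i \<in> carrier_vec d" and f: "\<And>i. i < k \<Longrightarrow> f i \<in> carrier_vec d"
  shows "A *\<^sub>v vec d (\<lambda>r. x $ r - (\<Sum>i<k. \<alpha> i * e i $ r + \<beta> i * f i $ r))
     = vec d (\<lambda>r. (A *\<^sub>v x) $ r - (\<Sum>i<k. \<alpha> i * (A *\<^sub>v e i) $ r + \<beta> i * (A *\<^sub>v f i) $ (r :: nat)))"
proof (rule eq_vecI)
  fix r assume "r < dim_vec (vec d (\<lambda>r. (A *\<^sub>v x) $ r - (\<Sum>i<k. \<alpha> i * (A *\<^sub>v e i) $ r + \<beta> i * (A *\<^sub>v f i) $ (r :: nat))))"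
  hence r: "r < d" by simp
  have rw: "row A r \<in> carrier_vec d" using A r by simp
  have "(A *\<^sub>v vec d (\<lambda>r. x $ r - (\<Sum>i<k. \<alpha> i * e i $ r + \<beta> i * f i $ r))) $ r
     = vec d (\<lambda>r. x $ r - (\<Sum>i<k. \<alpha> i * e i $ r + \<beta> i * f i $ r)) \<bullet> row A r"
    using A r by (simp add: comm_scalar_prod[of "row A r" d])
  also have "\<dots> = x \<bullet> row A r - (\<Sum>i<k. \<alpha> i * (e i \<bullet> row A r) + \<beta> i * (f i \<bullet> row A r))"
    by (rule lc_sp[OF x rw e f])
  also have "\<dots> = (A *\<^sub>v x) $ r - (\<Sum>i<k. \<alpha> i * (A *\<^sub>v e i) $ r + \<beta> i * (A *\<^sub>v f i) $ r)"
    using A r x e f by (auto simp: comm_scalar_prod[of _ d] intro!: sum.cong)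
  finally show "(A *\<^sub>v vec d (\<lambda>r. x $ r - (\<Sum>i<k. \<alpha> i * e i $ r + \<beta> i * f i $ r))) $ r
     = vec d (\<lambda>r. (A *\<^sub>v x) $ r - (\<Sum>i<k. \<alpha> i * (A *\<^sub>v e i) $ r + \<beta> i * (A *\<^sub>v f i) $ r)) $ r"
    using r by simp
qed (use A in simp)

definition hypS :: "nat \<Rightarrow> 'k::field_char_0 mat \<Rightarrow> 'k mat \<Rightarrow> bool" where
  "hypS d B S \<longleftrightarrow> B \<in> carrier_mat d d \<and> S \<in> carrier_mat d d \<and> S * S = 1\<^sub>m d \<and>
     (\<forall>x\<in>carrier_vec d. \<forall>y\<in>carrier_vec d. bform B (S *\<^sub>v x) (S *\<^sub>v y) = - bform B x y) \<and>
     symmetric_form d B \<and> nondegenerate d B"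

definition sysd :: "nat \<Rightarrow> 'k::field_char_0 mat \<Rightarrow> 'k mat \<Rightarrow> nat \<Rightarrow> (nat \<Rightarrow> 'k vec) \<Rightarrow> (nat \<Rightarrow> 'k vec) \<Rightarrow> bool" where
  "sysd d B S k e f \<longleftrightarrow> (\<forall>i<k. e i \<in> carrier_vec d \<and> f i \<in> carrier_vec d \<and> S *\<^sub>v e i = e i \<and> S *\<^sub>v f i = - f i) \<and>
     (\<forall>i<k. \<forall>j<k. bform B (e i) (f j) = (if i = j then 1 else 0))"

definition spans :: "nat \<Rightarrow> nat \<Rightarrow> (nat \<Rightarrow> 'k::field vec) \<Rightarrow> (nat \<Rightarrow> 'k vec) \<Rightarrow> bool" where
  "spans d k e f \<longleftrightarrow> (\<forall>v\<in>carrier_vec d. \<exists>a b. \<forall>r<d. v $ r = (\<Sum>i<k. a i * e i $ r + b i * f i $ r))"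

context
  fixes d :: nat and B :: "'k::field_char_0 mat"
  assumes BC: "B \<in> carrier_mat d d"
begin

lemma bf_add1: "u \<in> carrier_vec d \<Longrightarrow> v \<in> carrier_vec d \<Longrightarrow> w \<in> carrier_vec d \<Longrightarrow>
   bform B (u + v) w = bform B u w + bform B v w"
  unfolding bform_def using BC by (simp add: add_scalar_prod_distrib[of _ d])

lemma bf_add2: "u \<in> carrier_vec d \<Longrightarrow> v \<in> carrier_vec d \<Longrightarrow> w \<in> carrier_vec d \<Longrightarrow>
   bform B w (u + v) = bform B w u + bform B w v"
  unfolding bform_def using BC by (simp add: mult_add_distrib_mat_vec[of B d d] scalar_prod_add_distrib[of _ d])

lemma bf_smult1: "u \<in> carrier_vec d \<Longrightarrow> w \<in> carrier_vec d \<Longrightarrow> bform B (c \<cdot>\<^sub>v u) w = c * bform B u w"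
  unfolding bform_def using BC by simp

lemma bf_smult2: "u \<in> carrier_vec d \<Longrightarrow> w \<in> carrier_vec d \<Longrightarrow> bform B w (c \<cdot>\<^sub>v u) = c * bform B w u"
  unfolding bform_def using BC by (simp add: mult_mat_vec[of B d d])

lemma bf_neg1: "u \<in> carrier_vec d \<Longrightarrow> w \<in> carrier_vec d \<Longrightarrow> bform B (- u) w = - bform B u w"
  using bf_smult1[of u w "-1"] by (simp add: smult_vec_def uminus_vec_def bform_def)

lemma bf_neg2: "u \<in> carrier_vec d \<Longrightarrow> w \<in> carrier_vec d \<Longrightarrow> bform B w (- u) = - bform B w u"
proof -
  assume u: "u \<in> carrier_vec d" and w: "w \<in> carrier_vec d"
  have "- u = (-1) \<cdot>\<^sub>v u" by (rule eq_vecI) auto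
  thus ?thesis using bf_smult2[OF u w, of "-1"] by simp
qed

end

lemma neg_mat_vec: "S \<in> carrier_mat d d \<Longrightarrow> v \<in> carrier_vec d \<Longrightarrow> (- S) *\<^sub>v v = - (S *\<^sub>v (v :: 'k::field vec))"
  by (rule eq_vecI) (auto simp: scalar_prod_def sum_negf)

context
  fixes d :: nat and B S :: "'k::field_char_0 mat"
  assumes H: "hypS d B S"
begin

lemma BC: "B \<in> carrier_mat d d" and SC: "S \<in> carrier_mat d d" and SS: "S * S = 1\<^sub>m d"
  and inv: "\<And>x y. x \<in> carrier_vec d \<Longrightarrow> y \<in> carrier_vec d \<Longrightarrow> bform B (S *\<^sub>v x) (S *\<^sub>v y) = - bform B x y"
  and sym: "\<And>x y. x \<in> carrier_vec d \<Longrightarrow> y \<in> carrier_vec d \<Longrightarrow> bform B x y = bform B y x"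
  and nd: "nondegenerate d B"
  using H unfolding hypS_def symmetric_form_def by auto

lemma SSv: "v \<in> carrier_vec d \<Longrightarrow> S *\<^sub>v (S *\<^sub>v v) = v"
proof -
  assume v: "v \<in> carrier_vec d"
  have "S *\<^sub>v (S *\<^sub>v v) = (S * S) *\<^sub>v v" by (rule assoc_mult_mat_vec[symmetric]) (use SC v in auto)
  thus ?thesis using SS v by simp
qed

lemma iso_p: "x \<in> carrier_vec d \<Longrightarrow> y \<in> carrier_vec d \<Longrightarrow> S *\<^sub>v x = x \<Longrightarrow> S *\<^sub>v y = y \<Longrightarrow> bform B x y = 0"
  using inv[of x y] by simp

lemma iso_m: "x \<in> carrier_vec d \<Longrightarrow> y \<in> carrier_vec d \<Longrightarrow> S *\<^sub>v x = - x \<Longrightarrow> S *\<^sub>v y = - y \<Longrightarrow> bform B x y = 0"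
  using inv[of x y] bf_neg1[OF BC, of x "- y"] bf_neg2[OF BC, of y x] by simp

lemma hypS_neg: "hypS d B (- S)"
  unfolding hypS_def
proof (intro conjI ballI)
  show "B \<in> carrier_mat d d" by (rule BC)
  show "- S \<in> carrier_mat d d" using SC by simp
  show "- S * - S = 1\<^sub>m d" using SS SC by simp
  fix x y :: "'k vec" assume x: "x \<in> carrier_vec d" and y: "y \<in> carrier_vec d"
  show "bform B (- S *\<^sub>v x) (- S *\<^sub>v y) = - bform B x y"
    unfolding neg_mat_vec[OF SC x] neg_mat_vec[OF SC y]
    using bf_neg1[OF BC, of "S *\<^sub>v x" "- (S *\<^sub>v y)"] bf_neg2[OF BC, of "S *\<^sub>v y" "S *\<^sub>v x"] inv[OF x y] SC x y by simp
qed (use H in \<open>auto simp: hypS_def\<close>)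

lemma sys_swap: "sysd d B S k e f \<Longrightarrow> sysd d B (- S) k f e"
  unfolding sysd_def
proof (intro conjI allI impI)
  assume a: "(\<forall>i<k. e i \<in> carrier_vec d \<and> f i \<in> carrier_vec d \<and> S *\<^sub>v e i = e i \<and> S *\<^sub>v f i = - f i) \<and>
    (\<forall>i<k. \<forall>j<k. bform B (e i) (f j) = (if i = j then 1 else 0))"
  fix i assume i: "i < k"
  show "f i \<in> carrier_vec d" "e i \<in> carrier_vec d" using a i by auto
  show "- S *\<^sub>v f i = f i" "- S *\<^sub>v e i = - e i" using a i neg_mat_vec[OF SC] by auto
  fix j assume j: "j < k"
  show "bform B (f i) (e j) = (if i = j then 1 else 0)" using a i j sym by auto
qed

lemma ext_plus:
  assumes sy: "sysd d B S k e f" and p: "p \<in> carrier_vec d" "p \<noteq> 0\<^sub>v d" "S *\<^sub>v p = p"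
    and orth: "\<And>j. j < k \<Longrightarrow> bform B p (e j) = 0 \<and> bform B p (f j) = 0"
  shows "\<exists>e' f'. sysd d B S (Suc k) e' f'"
proof -
  have eC: "\<And>i. i < k \<Longrightarrow> e i \<in> carrier_vec d" and fC: "\<And>i. i < k \<Longrightarrow> f i \<in> carrier_vec d"
    and Se: "\<And>i. i < k \<Longrightarrow> S *\<^sub>v e i = e i" and Sf: "\<And>i. i < k \<Longrightarrow> S *\<^sub>v f i = - f i"
    and ef: "\<And>i j. i < k \<Longrightarrow> j < k \<Longrightarrow> bform B (e i) (f j) = (if i = j then 1 else 0)"
    using sy unfolding sysd_def by auto
  from nd p obtain y where y: "y \<in> carrier_vec d" "bform B p y \<noteq> 0"
    unfolding nondegenerate_def by auto
  define ny where "ny = (1/2) \<cdot>\<^sub>v (y - S *\<^sub>v y)"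
  define py where "py = (1/2) \<cdot>\<^sub>v (y + S *\<^sub>v y)"
  have Sy: "S *\<^sub>v y \<in> carrier_vec d" using SC y by simp
  have nyC: "ny \<in> carrier_vec d" and pyC: "py \<in> carrier_vec d" unfolding ny_def py_def using y Sy by auto
  have ypn: "y = py + ny" unfolding ny_def py_def using y Sy SC by (intro eq_vecI) (auto simp: field_simps)
  have Sny: "S *\<^sub>v ny = - ny"
  proof -
    have "S *\<^sub>v ny = (1/2) \<cdot>\<^sub>v (S *\<^sub>v y - S *\<^sub>v (S *\<^sub>v y))" unfolding ny_def
      using SC y Sy by (simp add: mult_mat_vec[of S d d] mult_minus_distrib_mat_vec[of S d d])
    also have "\<dots> = - ny" unfolding ny_def SSv[OF y(1)] using y Sy SC by (intro eq_vecI) (auto simp: field_simps)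
    finally show ?thesis .
  qed
  have Spy: "S *\<^sub>v py = py"
  proof -
    have "S *\<^sub>v py = (1/2) \<cdot>\<^sub>v (S *\<^sub>v y + S *\<^sub>v (S *\<^sub>v y))" unfolding py_def
      using SC y Sy by (simp add: mult_mat_vec[of S d d] mult_add_distrib_mat_vec[of S d d])
    also have "\<dots> = py" unfolding py_def SSv[OF y(1)] using y Sy SC by (intro eq_vecI) (auto simp: field_simps)
    finally show ?thesis .
  qed
  have "bform B p y = bform B p py + bform B p ny" unfolding ypn by (rule bf_add2[OF BC pyC nyC p(1)])
  moreover have "bform B p py = 0" by (rule iso_p[OF p(1) pyC p(3) Spy])
  ultimately have pny: "bform B p ny \<noteq> 0" using y by simp
  define \<beta> where "\<beta> = (\<lambda>i. bform B ny (e i))"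
  define z where "z = vec d (\<lambda>r. ny $ r - (\<Sum>i<k. 0 * e i $ r + \<beta> i * f i $ r))"
  have zC: "z \<in> carrier_vec d" unfolding z_def by simp
  have bz: "bform B z w = bform B ny w - (\<Sum>i<k. \<beta> i * bform B (f i) w)" if w: "w \<in> carrier_vec d" for w
  proof -
    have Bw: "B *\<^sub>v w \<in> carrier_vec d" using BC w by simp
    show ?thesis unfolding bform_def z_def using lc_sp[OF nyC Bw eC fC, where \<alpha>="\<lambda>_. 0" and \<beta>=\<beta>] by simp
  qed
  have Sz: "S *\<^sub>v z = - z"
  proof -
    have "S *\<^sub>v z = vec d (\<lambda>r. (S *\<^sub>v ny) $ r - (\<Sum>i<k. 0 * (S *\<^sub>v e i) $ r + \<beta> i * (S *\<^sub>v f i) $ r))"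
      unfolding z_def by (rule lc_mat_vec[OF SC nyC eC fC])
    also have "\<dots> = - z"
    proof (rule eq_vecI)
      fix r assume "r < dim_vec (- z)"
      hence r: "r < d" using zC by simp
      have "(\<Sum>i<k. 0 * (S *\<^sub>v e i) $ r + \<beta> i * (S *\<^sub>v f i) $ r) = - (\<Sum>i<k. 0 * e i $ r + \<beta> i * f i $ r)"
      proof (subst sum_negf[symmetric], rule sum.cong[OF refl])
        fix i assume "i \<in> {..<k}"
        hence "i < k" by simp
        thus "0 * (S *\<^sub>v e i) $ r + \<beta> i * (S *\<^sub>v f i) $ r = - (0 * e i $ r + \<beta> i * f i $ r)"
          using Sf[of i] fC[of i] r by simp
      qed
      thus "vec d (\<lambda>r. (S *\<^sub>v ny) $ r - (\<Sum>i<k. 0 * (S *\<^sub>v e i) $ r + \<beta> i * (S *\<^sub>v f i) $ r)) $ r = (- z) $ r"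
        unfolding Sny z_def using r nyC by simp
    qed (use zC in simp)
    finally show ?thesis .
  qed
  have ze: "bform B z (e j) = 0" if j: "j < k" for j
  proof -
    have "(\<Sum>i<k. \<beta> i * bform B (f i) (e j)) = (\<Sum>i<k. if i = j then \<beta> i else 0)"
      by (rule sum.cong) (use ef sym eC fC j in auto)
    also have "\<dots> = \<beta> j" using j by simp
    finally show ?thesis using bz[OF eC[OF j]] unfolding \<beta>_def by simp
  qed
  define t where "t = bform B p z"
  have t: "t = bform B p ny"
  proof -
    have "(\<Sum>i<k. \<beta> i * bform B (f i) p) = 0"
      by (rule sum.neutral) (use orth sym fC p(1) in auto)
    thus ?thesis unfolding t_def using sym[OF p(1) zC] bz[OF p(1)] sym[OF p(1) nyC] by simp
  qed
  hence t0: "t \<noteq> 0" using pny by simp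
  define e' where "e' = e(k := p)"
  define f' where "f' = f(k := (1 / t) \<cdot>\<^sub>v z)"
  have "sysd d B S (Suc k) e' f'"
    unfolding sysd_def
  proof (intro conjI allI impI)
    fix i assume i: "i < Suc k"
    show "e' i \<in> carrier_vec d" "f' i \<in> carrier_vec d" unfolding e'_def f'_def using i eC fC p zC
      by (auto simp: less_Suc_eq)
    show "S *\<^sub>v e' i = e' i" unfolding e'_def using i Se p by (auto simp: less_Suc_eq)
    show "S *\<^sub>v f' i = - f' i" unfolding f'_def using i Sf
      by (auto simp: less_Suc_eq mult_mat_vec[OF SC zC] Sz zC intro!: eq_vecI)
    fix j assume j: "j < Suc k"
    show "bform B (e' i) (f' j) = (if i = j then 1 else 0)"
    proof (cases "i < k")
      case True
      show ?thesis
      proof (cases "j < k")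
        case True
        thus ?thesis using \<open>i < k\<close> ef unfolding e'_def f'_def by auto
      next
        case False
        hence jk: "j = k" using j by simp
        have "bform B (e i) ((1 / t) \<cdot>\<^sub>v z) = (1/t) * bform B z (e i)"
          using bf_smult2[OF BC zC eC[OF \<open>i < k\<close>]] sym[OF eC[OF \<open>i < k\<close>] zC] by simp
        thus ?thesis unfolding e'_def f'_def jk using ze[OF \<open>i < k\<close>] \<open>i < k\<close> by simp
      qed
    next
      case False
      hence ik: "i = k" using i by simp
      show ?thesis
      proof (cases "j < k")
        case True
        thus ?thesis unfolding e'_def f'_def ik using orth by auto
      next
        case False
        hence jk: "j = k" using j by simp
        have "bform B p ((1 / t) \<cdot>\<^sub>v z) = (1/t) * t" unfolding t_def using bf_smult2[OF BC zC p(1)] by simp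
        thus ?thesis unfolding e'_def f'_def ik jk using t0 by simp
      qed
    qed
  qed
  thus ?thesis by blast
qed

end

context
  fixes d :: nat and B S :: "'k::field_char_0 mat"
  assumes H: "hypS d B S"
begin

lemma ext_step:
  assumes sy: "sysd d B S k e f" and ns: "\<not> spans d k e f"
  shows "\<exists>e' f'. sysd d B S (Suc k) e' f'"
proof -
  note BC = BC[OF H] and SC = SC[OF H] and inv = inv[OF H] and sym = sym[OF H] and SSv = SSv[OF H]
    and iso_p = iso_p[OF H] and iso_m = iso_m[OF H]
  have eC: "\<And>i. i < k \<Longrightarrow> e i \<in> carrier_vec d" and fC: "\<And>i. i < k \<Longrightarrow> f i \<in> carrier_vec d"
    and Se: "\<And>i. i < k \<Longrightarrow> S *\<^sub>v e i = e i" and Sf: "\<And>i. i < k \<Longrightarrow> S *\<^sub>v f i = - f i"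
    and ef: "\<And>i j. i < k \<Longrightarrow> j < k \<Longrightarrow> bform B (e i) (f j) = (if i = j then 1 else 0)"
    using sy unfolding sysd_def by auto
  from ns obtain x where x: "x \<in> carrier_vec d"
    and nx: "\<And>a b. \<exists>r<d. x $ r \<noteq> (\<Sum>i<k. a i * e i $ r + b i * f i $ r)"
    unfolding spans_def by blast
  define \<alpha> where "\<alpha> = (\<lambda>i. bform B x (f i))"
  define \<beta> where "\<beta> = (\<lambda>i. bform B x (e i))"
  define x' where "x' = vec d (\<lambda>r. x $ r - (\<Sum>i<k. \<alpha> i * e i $ r + \<beta> i * f i $ r))"
  have x'C: "x' \<in> carrier_vec d" unfolding x'_def by simp
  have x'0: "x' \<noteq> 0\<^sub>v d"
  proof
    assume "x' = 0\<^sub>v d"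
    hence "\<forall>r<d. x $ r = (\<Sum>i<k. \<alpha> i * e i $ r + \<beta> i * f i $ r)"
      unfolding x'_def by (metis (no_types, lifting) eq_iff_diff_eq_0 index_vec index_zero_vec(1))
    with nx[of \<alpha> \<beta>] show False by blast
  qed
  have bx: "bform B x' w = bform B x w - (\<Sum>i<k. \<alpha> i * bform B (e i) w + \<beta> i * bform B (f i) w)"
    if w: "w \<in> carrier_vec d" for w
  proof -
    have Bw: "B *\<^sub>v w \<in> carrier_vec d" using BC w by simp
    show ?thesis unfolding bform_def x'_def using lc_sp[OF x Bw eC fC, where \<alpha>=\<alpha> and \<beta>=\<beta>] by simp
  qed
  have ee: "bform B (e i) (e j) = 0" if "i < k" "j < k" for i j
    using iso_p[OF eC eC Se Se] that by blast
  have ff: "bform B (f i) (f j) = 0" if "i < k" "j < k" for i j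
    using iso_m[OF fC fC Sf Sf] that by blast
  have x'f: "bform B x' (f j) = 0" if j: "j < k" for j
  proof -
    have "(\<Sum>i<k. \<alpha> i * bform B (e i) (f j) + \<beta> i * bform B (f i) (f j)) = (\<Sum>i<k. if i = j then \<alpha> i else 0)"
      by (rule sum.cong) (use ef ff j in auto)
    thus ?thesis using bx[OF fC[OF j]] j unfolding \<alpha>_def by simp
  qed
  have x'e: "bform B x' (e j) = 0" if j: "j < k" for j
  proof -
    have "(\<Sum>i<k. \<alpha> i * bform B (e i) (e j) + \<beta> i * bform B (f i) (e j)) = (\<Sum>i<k. if i = j then \<beta> i else 0)"
      by (rule sum.cong) (use ef ee sym eC fC j in auto)
    thus ?thesis using bx[OF eC[OF j]] j unfolding \<beta>_def by simp
  qed
  have Sx'C: "S *\<^sub>v x' \<in> carrier_vec d" using SC x'C by simp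
  have Sx'e: "bform B (S *\<^sub>v x') (e j) = 0" if j: "j < k" for j
    using inv[OF x'C eC[OF j]] Se[OF j] x'e[OF j] by simp
  have Sx'f: "bform B (S *\<^sub>v x') (f j) = 0" if j: "j < k" for j
  proof -
    have "bform B (S *\<^sub>v x') (f j) = - bform B (S *\<^sub>v x') (S *\<^sub>v f j)"
      using Sf[OF j] bf_neg2[OF BC fC[OF j] Sx'C] by simp
    thus ?thesis using inv[OF x'C fC[OF j]] x'f[OF j] by simp
  qed
  define p where "p = (1/2) \<cdot>\<^sub>v (x' + S *\<^sub>v x')"
  define q where "q = (1/2) \<cdot>\<^sub>v (x' - S *\<^sub>v x')"
  have pC: "p \<in> carrier_vec d" and qC: "q \<in> carrier_vec d" unfolding p_def q_def using x'C Sx'C by auto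
  have xpq: "x' = p + q" unfolding p_def q_def using x'C Sx'C SC by (intro eq_vecI) (auto simp: field_simps)
  have Sp: "S *\<^sub>v p = p"
  proof -
    have "S *\<^sub>v p = (1/2) \<cdot>\<^sub>v (S *\<^sub>v x' + S *\<^sub>v (S *\<^sub>v x'))" unfolding p_def
      using SC x'C Sx'C by (simp add: mult_mat_vec[of S d d] mult_add_distrib_mat_vec[of S d d])
    also have "\<dots> = p" unfolding p_def SSv[OF x'C] using x'C Sx'C SC by (intro eq_vecI) (auto simp: field_simps)
    finally show ?thesis .
  qed
  have Sq: "- S *\<^sub>v q = q"
  proof -
    have "S *\<^sub>v q = (1/2) \<cdot>\<^sub>v (S *\<^sub>v x' - S *\<^sub>v (S *\<^sub>v x'))" unfolding q_def
      using SC x'C Sx'C by (simp add: mult_mat_vec[of S d d] mult_minus_distrib_mat_vec[of S d d])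
    also have "\<dots> = - q" unfolding q_def SSv[OF x'C] using x'C Sx'C SC by (intro eq_vecI) (auto simp: field_simps)
    finally show ?thesis using neg_mat_vec[OF SC qC] qC by simp
  qed
  have po: "bform B p (e j) = 0 \<and> bform B p (f j) = 0" if j: "j < k" for j
    unfolding p_def using bf_smult1[OF BC _ eC[OF j]] bf_smult1[OF BC _ fC[OF j]]
      bf_add1[OF BC x'C Sx'C eC[OF j]] bf_add1[OF BC x'C Sx'C fC[OF j]] x'e[OF j] x'f[OF j] Sx'e[OF j] Sx'f[OF j]
      x'C Sx'C by simp
  have qo: "bform B q (f j) = 0 \<and> bform B q (e j) = 0" if j: "j < k" for j
  proof -
    have m: "x' - S *\<^sub>v x' = x' + - (S *\<^sub>v x')" using x'C Sx'C by (intro eq_vecI) auto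
    show ?thesis
    unfolding q_def m using bf_smult1[OF BC _ eC[OF j]] bf_smult1[OF BC _ fC[OF j]]
      bf_add1[OF BC x'C _ eC[OF j]] bf_add1[OF BC x'C _ fC[OF j]] bf_neg1[OF BC Sx'C eC[OF j]] bf_neg1[OF BC Sx'C fC[OF j]]
      x'e[OF j] x'f[OF j] Sx'e[OF j] Sx'f[OF j] x'C Sx'C by simp
  qed
  show ?thesis
  proof (cases "p = 0\<^sub>v d")
    case False
    show ?thesis by (rule ext_plus[OF H sy pC False Sp po])
  next
    case True
    hence q0: "q \<noteq> 0\<^sub>v d" using x'0 xpq qC by auto
    have H': "hypS d B (- S)" by (rule hypS_neg[OF H])
    from ext_plus[OF H' sys_swap[OF H sy] qC q0 Sq qo]
    obtain e' f' where s': "sysd d B (- S) (Suc k) e' f'" by blast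
    have "sysd d B (- (- S)) (Suc k) f' e'" by (rule sys_swap[OF H' s'])
    thus ?thesis by auto
  qed
qed

lemma sys_mats:
  assumes sy: "sysd d B S k e f"
  shows "2 * k \<le> d \<and> (spans d k e f \<longrightarrow> d \<le> 2 * k)"
proof -
  note BC = BC[OF H] and sym = sym[OF H] and iso_p = iso_p[OF H] and iso_m = iso_m[OF H]
  have eC: "\<And>i. i < k \<Longrightarrow> e i \<in> carrier_vec d" and fC: "\<And>i. i < k \<Longrightarrow> f i \<in> carrier_vec d"
    and Se: "\<And>i. i < k \<Longrightarrow> S *\<^sub>v e i = e i" and Sf: "\<And>i. i < k \<Longrightarrow> S *\<^sub>v f i = - f i"
    and ef: "\<And>i j. i < k \<Longrightarrow> j < k \<Longrightarrow> bform B (e i) (f j) = (if i = j then 1 else 0)"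
    using sy unfolding sysd_def by auto
  define vC where "vC = (\<lambda>j. if j < k then e j else f (j - k))"
  define vD where "vD = (\<lambda>i. if i < k then f i else e (i - k))"
  have vCC: "vC j \<in> carrier_vec d" if "j < 2 * k" for j unfolding vC_def using that eC fC by auto
  have vDC: "vD j \<in> carrier_vec d" if "j < 2 * k" for j unfolding vD_def using that eC fC by auto
  define C where "C = mat d (2 * k) (\<lambda>(r,j). vC j $ r)"
  define D where "D = mat (2 * k) d (\<lambda>(i,r). (B *\<^sub>v vD i) $ r)"
  have CC: "C \<in> carrier_mat d (2 * k)" and DC: "D \<in> carrier_mat (2 * k) d" unfolding C_def D_def by auto
  have colC: "col C j = vC j" if "j < 2 * k" for j
    unfolding C_def using vCC[OF that] that by (intro eq_vecI) auto
  have rowD: "row D i = B *\<^sub>v vD i" if "i < 2 * k" for i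
    unfolding D_def using vDC[OF that] that BC by (intro eq_vecI) auto
  have entry: "(D * C) $$ (i,j) = bform B (vC j) (vD i)" if i: "i < 2 * k" and j: "j < 2 * k" for i j
  proof -
    have "(D * C) $$ (i,j) = (B *\<^sub>v vD i) \<bullet> vC j" using i j DC CC rowD colC by simp
    also have "\<dots> = vC j \<bullet> (B *\<^sub>v vD i)" using vCC[OF j] vDC[OF i] BC by (intro comm_scalar_prod[of _ d]) auto
    finally show ?thesis unfolding bform_def .
  qed
  have DC1: "D * C = 1\<^sub>m (2 * k)"
  proof (rule eq_matI)
    fix i j assume "i < dim_row (1\<^sub>m (2 * k) :: 'k mat)" "j < dim_col (1\<^sub>m (2 * k) :: 'k mat)"
    hence i: "i < 2 * k" and j: "j < 2 * k" by auto
    show "(D * C) $$ (i,j) = 1\<^sub>m (2 * k) $$ (i,j)"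
      unfolding entry[OF i j] vC_def vD_def using i j ef sym eC fC
        iso_p[OF eC eC Se Se] iso_m[OF fC fC Sf Sf]
      by (cases "i < k"; cases "j < k") (auto simp: sym[OF fC eC] ef)
  qed (use DC CC in auto)
  have le1: "2 * k \<le> d" by (rule mult_one_le[OF DC CC DC1])
  moreover have "d \<le> 2 * k" if sp: "spans d k e f"
  proof -
    have CDv: "C *\<^sub>v (D *\<^sub>v v) = v" if v: "v \<in> carrier_vec d" for v
    proof -
      from sp v obtain a b where ab: "\<And>r. r < d \<Longrightarrow> v $ r = (\<Sum>i<k. a i * e i $ r + b i * f i $ r)"
        unfolding spans_def by blast
      define av where "av = vec (2 * k) (\<lambda>j. if j < k then a j else b (j - k))"
      have avC: "av \<in> carrier_vec (2 * k)" unfolding av_def by simp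
      have Cav: "C *\<^sub>v av = v"
      proof (rule eq_vecI)
        fix r assume "r < dim_vec v"
        hence r: "r < d" using v by simp
        have "(C *\<^sub>v av) $ r = (\<Sum>j\<in>{0..<2*k}. vC j $ r * av $ j)"
          using r CC unfolding C_def av_def by (simp add: scalar_prod_def)
        also have "\<dots> = (\<Sum>j\<in>{0..<k}. vC j $ r * av $ j) + (\<Sum>j\<in>{k..<k+k}. vC j $ r * av $ j)"
          using sum.atLeastLessThan_concat[of 0 k "k+k" "\<lambda>j. vC j $ r * av $ j"] by (simp add: mult_2)
        also have "(\<Sum>j\<in>{k..<k+k}. vC j $ r * av $ j) = (\<Sum>j\<in>{0..<k}. vC (j + k) $ r * av $ (j + k))"
          using sum.shift_bounds_nat_ivl[of "\<lambda>j. vC j $ r * av $ j" 0 k k] by simp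
        also have "\<dots> = (\<Sum>j\<in>{0..<k}. f j $ r * b j)"
          by (rule sum.cong) (auto simp: vC_def av_def)
        also have "(\<Sum>j\<in>{0..<k}. vC j $ r * av $ j) = (\<Sum>j\<in>{0..<k}. e j $ r * a j)"
          by (rule sum.cong) (auto simp: vC_def av_def)
        finally have "(C *\<^sub>v av) $ r = (\<Sum>j\<in>{0..<k}. e j $ r * a j) + (\<Sum>j\<in>{0..<k}. f j $ r * b j)" .
        also have "\<dots> = v $ r" using ab[OF r] by (simp add: sum.distrib atLeast0LessThan ac_simps)
        finally show "(C *\<^sub>v av) $ r = v $ r" .
      qed (use v CC in auto)
      have "D *\<^sub>v v = (D * C) *\<^sub>v av" using Cav assoc_mult_mat_vec[OF DC CC avC] by simp
      also have "\<dots> = av" using DC1 avC by simp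
      finally show ?thesis using Cav by simp
    qed
    have CD1: "C * D = 1\<^sub>m d"
    proof (rule eq_matI)
      fix i j assume "i < dim_row (1\<^sub>m d :: 'k mat)" "j < dim_col (1\<^sub>m d :: 'k mat)"
      hence i: "i < d" and j: "j < d" by auto
      have gen: "(M *\<^sub>v unit_vec d j) $ i = M $$ (i,j)" if "M \<in> carrier_mat d d" for M :: "'k mat"
        using i j that by auto
      have "(C * D) $$ (i,j) = ((C * D) *\<^sub>v unit_vec d j) $ i"
        using gen[of "C * D"] CC DC by simp
      also have "(C * D) *\<^sub>v unit_vec d j = unit_vec d j"
        using CDv[of "unit_vec d j"] assoc_mult_mat_vec[OF CC DC, of "unit_vec d j"] by simp
      finally show "(C * D) $$ (i,j) = 1\<^sub>m d $$ (i,j)" using i j by simp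
    qed (use DC CC in auto)
    show ?thesis by (rule mult_one_le[OF CC DC CD1])
  qed
  ultimately show ?thesis by blast
qed

lemma hyp_of_span:
  assumes sy: "sysd d B S k e f" and sp: "spans d k e f"
  shows "hyperbolic_form d B"
proof -
  note sym = sym[OF H] and iso_p = iso_p[OF H] and iso_m = iso_m[OF H]
  have eC: "\<And>i. i < k \<Longrightarrow> e i \<in> carrier_vec d" and fC: "\<And>i. i < k \<Longrightarrow> f i \<in> carrier_vec d"
    and Se: "\<And>i. i < k \<Longrightarrow> S *\<^sub>v e i = e i" and Sf: "\<And>i. i < k \<Longrightarrow> S *\<^sub>v f i = - f i"
    and ef: "\<And>i j. i < k \<Longrightarrow> j < k \<Longrightarrow> bform B (e i) (f j) = (if i = j then 1 else 0)"
    using sy unfolding sysd_def by auto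
  have d: "d = 2 * k" using sys_mats[OF sy] sp by simp
  have c2: "\<forall>i<k. e i \<in> carrier_vec d \<and> f i \<in> carrier_vec d" using eC fC by auto
  have c3: "\<forall>i<k. \<forall>j<k. bform B (e i) (e j) = 0 \<and> bform B (f i) (f j) = 0 \<and>
         bform B (e i) (f j) = (if i = j then 1 else 0) \<and>
         bform B (f j) (e i) = (if i = j then 1 else 0)"
  proof (intro allI impI conjI)
    fix i j assume i: "i < k" and j: "j < k"
    show "bform B (e i) (e j) = 0" using iso_p[OF eC eC Se Se] i j by blast
    show "bform B (f i) (f j) = 0" using iso_m[OF fC fC Sf Sf] i j by blast
    show "bform B (e i) (f j) = (if i = j then 1 else 0)" using ef i j by blast
    show "bform B (f j) (e i) = (if i = j then 1 else 0)" using ef i j sym[OF fC[OF j] eC[OF i]] by simp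
  qed
  have c4: "\<forall>v \<in> carrier_vec d. \<exists>a b. \<forall>k'<d. v $ k' = (\<Sum>i<k. a i * e i $ k' + b i * f i $ k')"
    using sp unfolding spans_def by blast
  show ?thesis unfolding hyperbolic_form_def
    by (rule exI[of _ k], rule exI[of _ e], rule exI[of _ f]) (intro conjI d c2 c3 c4)
qed

lemma hyperbolic_main: "hyperbolic_form d B"
proof -
  have P: "(\<exists>e f. sysd d B S k e f) \<or> hyperbolic_form d B" for k
  proof (induction k)
    case 0
    show ?case unfolding sysd_def by auto
  next
    case (Suc k)
    show ?case
    proof (cases "hyperbolic_form d B")
      case False
      with Suc obtain e f where sy: "sysd d B S k e f" by blast
      show ?thesis
      proof (cases "spans d k e f")
        case True
        thus ?thesis using hyp_of_span[OF sy] by blast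
      next
        case False
        thus ?thesis using ext_step[OF sy] by blast
      qed
    qed simp
  qed
  from P[of "Suc d"] show ?thesis
  proof
    assume "\<exists>e f. sysd d B S (Suc d) e f"
    then obtain e f where "sysd d B S (Suc d) e f" by blast
    from sys_mats[OF this] show ?thesis by simp
  qed
qed

end

lemma exists_nonscalar_refl:
  assumes W: "finite_reflection_group n W" and irr: "irreducible_rep n W d (\<rho> :: complex mat \<Rightarrow> 'k::field mat)"
    and d: "d > 1"
  shows "\<exists>s \<in> reflections n W. \<rho> s \<noteq> 1\<^sub>m d \<and> \<rho> s \<noteq> - (1\<^sub>m d)"
proof (rule ccontr)
  assume "\<not> ?thesis"
  hence all: "\<And>s. s \<in> reflections n W \<Longrightarrow> \<rho> s = 1\<^sub>m d \<or> \<rho> s = - (1\<^sub>m d)" by blast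
  have R: "is_rep n W d \<rho>" using irr unfolding irreducible_rep_def by auto
  have G: "finite_mat_group n W" using W unfolding finite_reflection_group_def by auto
  have sc: "\<exists>c. \<rho> w = c \<cdot>\<^sub>m 1\<^sub>m d" if w: "w \<in> W" for w
  proof (rule gen_induct[OF W _ _ w])
    show "\<exists>c. \<rho> (1\<^sub>m n) = c \<cdot>\<^sub>m 1\<^sub>m d" using R unfolding is_rep_def
      by (intro exI[of _ 1]) (simp add: one_smult_mat')
  next
    fix s x assume s: "s \<in> reflections n W" and x: "x \<in> W" and IH: "\<exists>c. \<rho> x = c \<cdot>\<^sub>m 1\<^sub>m d"
    have sW: "s \<in> W" using s unfolding reflections_def by auto
    from IH obtain c where c: "\<rho> x = c \<cdot>\<^sub>m 1\<^sub>m d" by blast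
    have "\<rho> (s * x) = \<rho> s * \<rho> x" using R sW x unfolding is_rep_def by auto
    moreover from all[OF s] have "\<rho> s * \<rho> x = c \<cdot>\<^sub>m 1\<^sub>m d \<or> \<rho> s * \<rho> x = (- c) \<cdot>\<^sub>m 1\<^sub>m d"
      unfolding c by (auto intro!: eq_matI)
    ultimately show "\<exists>c. \<rho> (s * x) = c \<cdot>\<^sub>m 1\<^sub>m d" by metis
  qed
  define U where "U = {v :: 'k vec. \<exists>a. v = a \<cdot>\<^sub>v unit_vec d 0}"
  have sub: "is_subspace d U" unfolding is_subspace_def
  proof (intro conjI ballI allI)
    show "U \<subseteq> carrier_vec d" unfolding U_def by auto
    show "0\<^sub>v d \<in> U" unfolding U_def by (auto intro!: exI[of _ 0] eq_vecI)
    fix u v assume "u \<in> U" "v \<in> U"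
    then obtain a b where "u = a \<cdot>\<^sub>v unit_vec d 0" "v = b \<cdot>\<^sub>v unit_vec d 0" unfolding U_def by auto
    thus "u + v \<in> U" unfolding U_def by (auto intro!: exI[of _ "a + b"] eq_vecI simp: algebra_simps)
  next
    fix c :: 'k and u assume "u \<in> U"
    then obtain a where "u = a \<cdot>\<^sub>v unit_vec d 0" unfolding U_def by auto
    thus "c \<cdot>\<^sub>v u \<in> U" unfolding U_def by (auto intro!: exI[of _ "c * a"] eq_vecI)
  qed
  have invU: "\<forall>w\<in>W. \<forall>u\<in>U. \<rho> w *\<^sub>v u \<in> U"
  proof (intro ballI)
    fix w u assume w: "w \<in> W" and u: "u \<in> U"
    from sc[OF w] obtain c where c: "\<rho> w = c \<cdot>\<^sub>m 1\<^sub>m d" by blast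
    from u obtain a where a: "u = a \<cdot>\<^sub>v unit_vec d 0" unfolding U_def by auto
    have "\<rho> w *\<^sub>v u = c \<cdot>\<^sub>v (a \<cdot>\<^sub>v unit_vec d 0)" unfolding c a
      by (rule smult_one_mult_vec) simp
    also have "\<dots> = (c * a) \<cdot>\<^sub>v unit_vec d 0" by (rule eq_vecI) auto
    finally have "\<rho> w *\<^sub>v u = (c * a) \<cdot>\<^sub>v unit_vec d 0" .
    thus "\<rho> w *\<^sub>v u \<in> U" unfolding U_def by auto
  qed
  from irr sub invU have "U = {0\<^sub>v d} \<or> U = carrier_vec d" unfolding irreducible_rep_def by blast
  moreover have "unit_vec d 0 \<in> U" unfolding U_def by (auto intro!: exI[of _ 1])
  moreover have "unit_vec d 0 \<noteq> (0\<^sub>v d :: 'k vec)" using d by simp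
  moreover have "unit_vec d 1 \<notin> U"
  proof
    assume "unit_vec d 1 \<in> U"
    then obtain a where "unit_vec d 1 = a \<cdot>\<^sub>v (unit_vec d 0 :: 'k vec)" unfolding U_def by auto
    from arg_cong[OF this, of "\<lambda>v. v $ 1"] d show False by simp
  qed
  moreover have "unit_vec d 1 \<in> carrier_vec d" by simp
  ultimately show False by blast
qed

lemma hyp_part:
  assumes W: "finite_reflection_group n W" and irr: "irreducible_rep n W d (\<rho> :: complex mat \<Rightarrow> 'k::field_char_0 mat)"
    and eta: "\<eta> \<in> X_set n W d \<rho>"
    and Bi: "invariant_form W d \<rho> (\<lambda>w. sign_char w * \<eta> w) B" and nd: "nondegenerate d B"
    and sym: "symmetric_form d B" and d: "d > 1"
  shows "hyperbolic_form d B"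
proof -
  have R: "is_rep n W d \<rho>" using irr unfolding irreducible_rep_def by auto
  obtain s where s: "s \<in> reflections n W" and ns: "\<rho> s \<noteq> 1\<^sub>m d \<and> \<rho> s \<noteq> - (1\<^sub>m d)"
    using exists_nonscalar_refl[OF W irr d] by blast
  note p = refl_props[OF W R s]
  have h: "sign_hom W \<eta>" using eta unfolding X_set_def by auto
  have "\<eta> s = 1 \<or> \<eta> s = -1" using h p(1) unfolding sign_hom_def by auto
  moreover have "\<eta> s \<noteq> -1" using eta s ns unfolding X_set_def by auto
  ultimately have e1: "\<eta> s = 1" by simp
  have "hypS d B (\<rho> s)" unfolding hypS_def
  proof (intro conjI ballI)
    show "B \<in> carrier_mat d d" using Bi unfolding invariant_form_def by auto
    show "\<rho> s \<in> carrier_mat d d" by (rule p(4))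
    show "\<rho> s * \<rho> s = 1\<^sub>m d" by (rule p(3))
    fix x y :: "'k vec" assume x: "x \<in> carrier_vec d" and y: "y \<in> carrier_vec d"
    show "bform B (\<rho> s *\<^sub>v x) (\<rho> s *\<^sub>v y) = - bform B x y"
      using Bi p(1,2) e1 x y unfolding invariant_form_def by auto
  qed (use sym nd in auto)
  thus ?thesis by (rule hyperbolic_main)
qed

theorem proposition2p3:
  fixes n d :: nat
    and W :: "complex mat set"
    and \<rho> :: "complex mat \<Rightarrow> 'k :: field_char_0 mat"
    and \<eta> :: "complex mat \<Rightarrow> 'k"
  assumes W: "finite_reflection_group n W"
    and k: "splitting_field_for TYPE('k) n W"
    and irr: "irreducible_rep n W d \<rho>"
    and eta: "\<eta> \<in> X_set n W d \<rho>"
    and iso: "rep_iso W d (twist (dual_rep n W \<rho>) sign_char) (twist \<rho> \<eta>)"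
  shows "(\<forall>\<eta>' \<in> X_set n W d \<rho>.
            rep_iso W d (twist (dual_rep n W \<rho>) sign_char) (twist \<rho> \<eta>') \<longrightarrow>
            (\<forall>w \<in> W. \<eta>' w = \<eta> w))
       \<and> (\<exists>B. invariant_form W d \<rho> (\<lambda>w. sign_char w * \<eta> w) B \<and> nondegenerate d B)
       \<and> (\<forall>B B'. invariant_form W d \<rho> (\<lambda>w. sign_char w * \<eta> w) B \<and> nondegenerate d B \<and>
                 invariant_form W d \<rho> (\<lambda>w. sign_char w * \<eta> w) B' \<longrightarrow>
                 (\<exists>c. B' = c \<cdot>\<^sub>m B))
       \<and> (\<forall>B. invariant_form W d \<rho> (\<lambda>w. sign_char w * \<eta> w) B \<and> nondegenerate d B \<longrightarrow>
              (\<forall>a \<in> lie_H' n W. in_osp d B (rep_ext W d \<rho> a))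
            \<and> (symmetric_form d B \<and> d > 1 \<longrightarrow> hyperbolic_form d B))"
proof (intro conjI)
  have G: "finite_mat_group n W" using W unfolding finite_reflection_group_def by auto
  have R: "is_rep n W d \<rho>" and d0: "d > 0" using irr unfolding irreducible_rep_def by auto
  have h: "sign_hom W \<eta>" using eta unfolding X_set_def by auto
  show "\<forall>\<eta>' \<in> X_set n W d \<rho>.
            rep_iso W d (twist (dual_rep n W \<rho>) sign_char) (twist \<rho> \<eta>') \<longrightarrow>
            (\<forall>w \<in> W. \<eta>' w = \<eta> w)"
    using eta_unique[OF W R d0 eta _ iso] by blast
  show "\<exists>B. invariant_form W d \<rho> (\<lambda>w. sign_char w * \<eta> w) B \<and> nondegenerate d B"
    by (rule exists_form[OF G R h iso])
  have chi: "(sign_char w * \<eta> w) * (sign_char w * \<eta> w) = (1::'k)" if "w \<in> W" for w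
  proof -
    have "(sign_char w :: 'k) * sign_char w = 1" unfolding sign_char_def by auto
    moreover have "\<eta> w * \<eta> w = 1" using sign_hom_sq[OF h that] .
    ultimately show ?thesis by (metis mult.assoc mult.commute mult_1_right)
  qed
  show "\<forall>B B'. invariant_form W d \<rho> (\<lambda>w. sign_char w * \<eta> w) B \<and> nondegenerate d B \<and>
                 invariant_form W d \<rho> (\<lambda>w. sign_char w * \<eta> w) B' \<longrightarrow>
                 (\<exists>c. B' = c \<cdot>\<^sub>m B)"
  proof (intro allI impI, elim conjE)
    fix B B' assume a: "invariant_form W d \<rho> (\<lambda>w. sign_char w * \<eta> w) B" "nondegenerate d B"
      "invariant_form W d \<rho> (\<lambda>w. sign_char w * \<eta> w) B'"
    show "\<exists>c. B' = c \<cdot>\<^sub>m B" by (rule form_unique[OF G R k irr _ a]) (rule chi)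
  qed
  show "\<forall>B. invariant_form W d \<rho> (\<lambda>w. sign_char w * \<eta> w) B \<and> nondegenerate d B \<longrightarrow>
              (\<forall>a \<in> lie_H' n W. in_osp d B (rep_ext W d \<rho> a))
            \<and> (symmetric_form d B \<and> d > 1 \<longrightarrow> hyperbolic_form d B)"
    using osp_part[OF W R eta] hyp_part[OF W irr eta] by blast
qed

end
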